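(* Let $\mathcal{E}^1,\dots,\mathcal{E}^L$ be $m$-party quantum state ensembles, $\mathcal{E}^l=\{\eta^l_i,\rho^l_i\}_{i=1}^{n_l}$, and let $\vec{x}\in\mathbb{N}_{\vec n}$. Then $p_{\sf L}\big(\bigotimes_{l=1}^L\mathcal{E}^l\big)=\eta_{\vec x}$ if and only if $\eta_{\vec x}\rho_{\vec x}-\eta_{\vec c}\rho_{\vec c}\in\mathbb{SEP}^*$ for all $\vec c\in\mathbb{N}_{\vec n}$. Moreover, in this case $p_{\sf L}\big(\bigotimes_{l=1}^L\mathcal{E}^l\big)=p_{\sf SEP}\big(\bigotimes_{l=1}^L\mathcal{E}^l\big)$ and $p_{\sf L}\big(\bigotimes_{l=1}^L\mathcal{E}^l\big)=\prod_{l=1}^Lp_{\sf L}(\mathcal{E}^l)$.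
   Context: Each ensemble $\mathcal{E}^l$ consists of $m$-party states $\rho^l_i$ on $\mathcal{H}=\bigotimes_{k=1}^m\mathbb{C}^{d_k}$ ($m,d_k\ge2$) with nonzero probabilities $\eta^l_i$ summing to $1$. Let $\mathbb{N}_{n_l}=\{1,\dots,n_l\}$, $\vec n=(n_1,\dots,n_L)$, $\mathbb{N}_{\vec n}=\mathbb{N}_{n_1}\times\cdots\times\mathbb{N}_{n_L}$. For $\vec c=(c_1,\dots,c_L)\in\mathbb{N}_{\vec n}$ set $\eta_{\vec c}=\prod_l\eta^l_{c_l}$ and $\rho_{\vec c}=\bigotimes_l\rho^l_{c_l}$; the sequence ensemble is $\bigotimes_l\mathcal{E}^l=\{\eta_{\vec c},\rho_{\vec c}\}_{\vec c\in\mathbb{N}_{\vec n}}$, viewed as an $m$-party ensemble on $\mathcal{H}^{\otimes L}$ in which party $\mathsf{A}_k$ holds the $k$-th factor $\mathbb{C}^{d_k}$ of every copy (so it is again an $m$-party system with local dimensions $d_k^L$). Separability: an operator is separable if it is a sum of tensor products, over the parties $\mathsf{A}_1,\dots,\mathsf{A}_m$, of positive semidefinite local operators; $\mathbb{SEP}$ denotes these. $\mathbb{SEP}^*$ is the set of Hermitian $E$ with $\operatorname{Tr}(E\sigma)\ge0$ for every separable state $\sigma$ (block-positive operators), with respect to $\mathsf{A}_1,\dots,\mathsf{A}_m$. A measurement is separable if all its elements are separable, LOCC if realizable by local operations and classical communication among $\mathsf{A}_1,\dots,\mathsf{A}_m$. For an ensemble $\{\eta_j,\rho_j\}_j$, $p_{\sf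 G}$, $p_{\sf SEP}$, $p_{\sf L}$ denote the maximum of $\sum_j\eta_j\operatorname{Tr}(\rho_jM_j)$ over all measurements, separable measurements, and LOCC measurements $\{M_j\}_j$ respectively. *)

theory Defs
  imports "HOL-Analysis.Analysis"
begin

text \<open>Operators on a finite-dimensional space with orthonormal basis indexed by a
finite set I are represented as kernels I x I -> complex (values outside I are
irrelevant).  An m-party system with local basis index sets S k (k < m) has
global basis index set PiE {..<m} S, i.e. the tensor product of the local spaces.\<close>

type_synonym 'i op = "'i \<Rightarrow> 'i \<Rightarrow> complex"

definition gidx :: "nat \<Rightarrow> (nat \<Rightarrow> 'a set) \<Rightarrow> (nat \<Rightarrow> 'a) set" where
  "gidx m S = PiE {..<m} S"

definition idop :: "'i op" where
  "idop i j = (if i = j then 1 else 0)"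

definition mmult :: "'i set \<Rightarrow> 'i op \<Rightarrow> 'i op \<Rightarrow> 'i op" where
  "mmult I A B = (\<lambda>i j. \<Sum>k\<in>I. A i k * B k j)"

definition trace_on :: "'i set \<Rightarrow> 'i op \<Rightarrow> complex" where
  "trace_on I A = (\<Sum>i\<in>I. A i i)"

definition hermitian_on :: "'i set \<Rightarrow> 'i op \<Rightarrow> bool" where
  "hermitian_on I A \<longleftrightarrow> (\<forall>i\<in>I. \<forall>j\<in>I. A i j = cnj (A j i))"

definition psd_on :: "'i set \<Rightarrow> 'i op \<Rightarrow> bool" where
  "psd_on I A \<longleftrightarrow> (\<forall>v :: 'i \<Rightarrow> complex.
      Im (\<Sum>i\<in>I. \<Sum>j\<in>I. cnj (v i) * A i j * v j) = 0 \<and>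
      0 \<le> Re (\<Sum>i\<in>I. \<Sum>j\<in>I. cnj (v i) * A i j * v j))"

definition density_on :: "'i set \<Rightarrow> 'i op \<Rightarrow> bool" where
  "density_on I \<rho> \<longleftrightarrow> psd_on I \<rho> \<and> trace_on I \<rho> = 1"

definition ptensor :: "nat \<Rightarrow> (nat \<Rightarrow> 'a op) \<Rightarrow> (nat \<Rightarrow> 'a) op" where
  "ptensor m A = (\<lambda>f g. \<Prod>k<m. A k (f k) (g k))"

definition sep_op :: "nat \<Rightarrow> (nat \<Rightarrow> 'a set) \<Rightarrow> (nat \<Rightarrow> 'a) op \<Rightarrow> bool" where
  "sep_op m S E \<longleftrightarrow> (\<exists>(N::nat) (A :: nat \<Rightarrow> nat \<Rightarrow> 'a op).
      (\<forall>t<N. \<forall>k<m. psd_on (S k) (A t k)) \<and>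
      (\<forall>f\<in>gidx m S. \<forall>g\<in>gidx m S. E f g = (\<Sum>t<N. ptensor m (A t) f g)))"

definition sep_state :: "nat \<Rightarrow> (nat \<Rightarrow> 'a set) \<Rightarrow> (nat \<Rightarrow> 'a) op \<Rightarrow> bool" where
  "sep_state m S \<sigma> \<longleftrightarrow> sep_op m S \<sigma> \<and> trace_on (gidx m S) \<sigma> = 1"

definition sep_dual :: "nat \<Rightarrow> (nat \<Rightarrow> 'a set) \<Rightarrow> (nat \<Rightarrow> 'a) op \<Rightarrow> bool" where
  "sep_dual m S E \<longleftrightarrow> hermitian_on (gidx m S) E \<and>
     (\<forall>\<sigma>. sep_state m S \<sigma> \<longrightarrow> 0 \<le> Re (trace_on (gidx m S) (mmult (gidx m S) E \<sigma>)))"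

definition povm_on :: "'i set \<Rightarrow> 'c set \<Rightarrow> ('c \<Rightarrow> 'i op) \<Rightarrow> bool" where
  "povm_on I C M \<longleftrightarrow> finite C \<and> (\<forall>c\<in>C. psd_on I (M c)) \<and>
     (\<forall>i\<in>I. \<forall>j\<in>I. (\<Sum>c\<in>C. M c i j) = idop i j)"

definition psucc :: "'i set \<Rightarrow> 'c set \<Rightarrow> ('c \<Rightarrow> real) \<Rightarrow> ('c \<Rightarrow> 'i op) \<Rightarrow> ('c \<Rightarrow> 'i op) \<Rightarrow> real" where
  "psucc I C \<eta> \<rho> M = (\<Sum>c\<in>C. \<eta> c * Re (trace_on I (mmult I (\<rho> c) (M c))))"

definition loc_lift :: "nat \<Rightarrow> nat \<Rightarrow> 'a op \<Rightarrow> (nat \<Rightarrow> 'a) op" where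
  "loc_lift m k K = (\<lambda>f' f. K (f' k) (f k) * (\<Prod>k'\<in>{..<m} - {k}. idop (f' k') (f k')))"

definition sandwich :: "'i set \<Rightarrow> 'i op \<Rightarrow> 'i op \<Rightarrow> 'i op" where
  "sandwich I' K P = (\<lambda>f g. \<Sum>f'\<in>I'. \<Sum>g'\<in>I'. cnj (K f' f) * P f' g' * K g' g)"

definition kraus_complete :: "'a set \<Rightarrow> 'a set \<Rightarrow> nat set \<Rightarrow> (nat \<Rightarrow> 'a op) \<Rightarrow> bool" where
  "kraus_complete S S' A K \<longleftrightarrow> (\<forall>j\<in>S. \<forall>j'\<in>S.
      (\<Sum>a\<in>A. \<Sum>i\<in>S'. cnj (K a i j) * K a i j') = idop j j')"

text \<open>loccp m S O P: P w (w in O) are the POVM elements, indexed by the transcripts w,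
of a finite-round LOCC protocol on the m-party system with local index sets S.
In each round some party k applies a local instrument (output space may change),
broadcasts the outcome a, and the protocol continues depending on a.\<close>
inductive loccp :: "nat \<Rightarrow> (nat \<Rightarrow> 'a set) \<Rightarrow> nat list set \<Rightarrow> (nat list \<Rightarrow> (nat \<Rightarrow> 'a) op) \<Rightarrow> bool"
  for m :: nat where
  triv: "loccp m S {[]} (\<lambda>_. idop)"
| step: "\<lbrakk> k < m; finite A; finite S'; kraus_complete (S k) S' A K;
          \<forall>a\<in>A. loccp m (S(k := S')) (Os a) (Ps a) \<rbrakk> \<Longrightarrow>
         loccp m S (\<Union>a\<in>A. (Cons a) ` Os a)
           (\<lambda>w. sandwich (gidx m (S(k := S'))) (loc_lift m k (K (hd w))) (Ps (hd w) (tl w)))"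

text \<open>LOCC measurement: coarse-graining of the outcomes of a finite-round LOCC protocol.\<close>
definition locc_povm :: "nat \<Rightarrow> (nat \<Rightarrow> 'a set) \<Rightarrow> 'c set \<Rightarrow> ('c \<Rightarrow> (nat \<Rightarrow> 'a) op) \<Rightarrow> bool" where
  "locc_povm m S C M \<longleftrightarrow> (\<exists>Ws P (g :: nat list \<Rightarrow> 'c). loccp m S Ws P \<and> g ` Ws \<subseteq> C \<and>
      (\<forall>c\<in>C. \<forall>f\<in>gidx m S. \<forall>h\<in>gidx m S. M c f h = (\<Sum>w\<in>{w\<in>Ws. g w = c}. P w f h)))"

definition sep_povm :: "nat \<Rightarrow> (nat \<Rightarrow> 'a set) \<Rightarrow> 'c set \<Rightarrow> ('c \<Rightarrow> (nat \<Rightarrow> 'a) op) \<Rightarrow> bool" where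
  "sep_povm m S C M \<longleftrightarrow> (\<forall>c\<in>C. sep_op m S (M c))"

definition p_G :: "nat \<Rightarrow> (nat \<Rightarrow> 'a set) \<Rightarrow> 'c set \<Rightarrow> ('c \<Rightarrow> real) \<Rightarrow> ('c \<Rightarrow> (nat \<Rightarrow> 'a) op) \<Rightarrow> real" where
  "p_G m S C \<eta> \<rho> = Sup {psucc (gidx m S) C \<eta> \<rho> M | M. povm_on (gidx m S) C M}"

definition p_SEP :: "nat \<Rightarrow> (nat \<Rightarrow> 'a set) \<Rightarrow> 'c set \<Rightarrow> ('c \<Rightarrow> real) \<Rightarrow> ('c \<Rightarrow> (nat \<Rightarrow> 'a) op) \<Rightarrow> real" where
  "p_SEP m S C \<eta> \<rho> = Sup {psucc (gidx m S) C \<eta> \<rho> M | M. povm_on (gidx m S) C M \<and> sep_povm m S C M}"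

definition p_L :: "nat \<Rightarrow> (nat \<Rightarrow> 'a set) \<Rightarrow> 'c set \<Rightarrow> ('c \<Rightarrow> real) \<Rightarrow> ('c \<Rightarrow> (nat \<Rightarrow> 'a) op) \<Rightarrow> real" where
  "p_L m S C \<eta> \<rho> = Sup {psucc (gidx m S) C \<eta> \<rho> M | M. povm_on (gidx m S) C M \<and> locc_povm m S C M}"

definition ensemble :: "nat \<Rightarrow> (nat \<Rightarrow> nat) \<Rightarrow> nat \<Rightarrow> (nat \<Rightarrow> real) \<Rightarrow> (nat \<Rightarrow> (nat \<Rightarrow> nat) op) \<Rightarrow> bool" where
  "ensemble m d n \<eta> \<rho> \<longleftrightarrow> n \<ge> 1 \<and> (\<forall>i\<in>{1..n}. \<eta> i > 0) \<and> (\<Sum>i\<in>{1..n}. \<eta> i) = 1 \<and>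
     (\<forall>i\<in>{1..n}. density_on (gidx m (\<lambda>k. {..<d k})) (\<rho> i))"

text \<open>L-copy system: party k holds the k-th factor of every copy l in {1..L};
its local basis index is a function l \<mapsto> i_l.\<close>
definition seqS :: "nat \<Rightarrow> (nat \<Rightarrow> nat) \<Rightarrow> nat \<Rightarrow> (nat \<Rightarrow> nat) set" where
  "seqS L d = (\<lambda>k. PiE {1..L} (\<lambda>l. {..<d k}))"

definition seq_idx :: "nat \<Rightarrow> (nat \<Rightarrow> nat) \<Rightarrow> (nat \<Rightarrow> nat) set" where
  "seq_idx L n = PiE {1..L} (\<lambda>l. {1..n l})"

definition seq_prob :: "nat \<Rightarrow> (nat \<Rightarrow> nat \<Rightarrow> real) \<Rightarrow> (nat \<Rightarrow> nat) \<Rightarrow> real" where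
  "seq_prob L \<eta> c = (\<Prod>l\<in>{1..L}. \<eta> l (c l))"

definition seq_state :: "nat \<Rightarrow> nat \<Rightarrow> (nat \<Rightarrow> nat \<Rightarrow> (nat \<Rightarrow> nat) op) \<Rightarrow> (nat \<Rightarrow> nat)
    \<Rightarrow> (nat \<Rightarrow> (nat \<Rightarrow> nat)) op" where
  "seq_state m L \<rho> c = (\<lambda>F G. \<Prod>l\<in>{1..L}.
      \<rho> l (c l) (restrict (\<lambda>k. F k l) {..<m}) (restrict (\<lambda>k. G k l) {..<m}))"

end

theory Submission
  imports Defs
begin


definition qf :: "'i set \<Rightarrow> 'i op \<Rightarrow> ('i \<Rightarrow> complex) \<Rightarrow> complex" where
  "qf I A v = (\<Sum>i\<in>I. \<Sum>j\<in>I. cnj (v i) * A i j * v j)"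

lemma psd_on_qf: "psd_on I A \<longleftrightarrow> (\<forall>v. Im (qf I A v) = 0 \<and> 0 \<le> Re (qf I A v))"
  unfolding psd_on_def qf_def by simp

lemma qf_cong: "(\<And>i j. i \<in> I \<Longrightarrow> j \<in> I \<Longrightarrow> A i j = B i j) \<Longrightarrow> (\<And>i. i \<in> I \<Longrightarrow> v i = w i)
   \<Longrightarrow> qf I A v = qf I B w"
  unfolding qf_def by (intro sum.cong refl) auto

lemma psd_on_cong: "(\<And>i j. i \<in> I \<Longrightarrow> j \<in> I \<Longrightarrow> A i j = B i j) \<Longrightarrow> psd_on I A \<longleftrightarrow> psd_on I B"
  unfolding psd_on_qf using qf_cong[of I A B] by metis

lemma qf_subset:
  assumes "finite I" "J \<subseteq> I" "\<And>i. i \<in> I - J \<Longrightarrow> v i = 0"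
  shows "qf I A v = qf J A v"
proof -
  have "qf I A v = (\<Sum>i\<in>I. \<Sum>j\<in>J. cnj (v i) * A i j * v j)"
    unfolding qf_def
  proof (rule sum.cong[OF refl])
    fix i assume "i \<in> I"
    show "(\<Sum>j\<in>I. cnj (v i) * A i j * v j) = (\<Sum>j\<in>J. cnj (v i) * A i j * v j)"
      by (rule sum.mono_neutral_right) (use assms in auto)
  qed
  also have "\<dots> = (\<Sum>i\<in>J. \<Sum>j\<in>J. cnj (v i) * A i j * v j)"
    by (intro sum.mono_neutral_right) (use assms in auto)
  finally show ?thesis unfolding qf_def .
qed

lemma qf_two:
  assumes "finite I" "a \<in> I" "b \<in> I" "a \<noteq> b" "\<And>i. i \<in> I \<Longrightarrow> i \<noteq> a \<Longrightarrow> i \<noteq> b \<Longrightarrow> v i = 0"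
  shows "qf I A v = cnj (v a) * A a a * v a + cnj (v a) * A a b * v b + cnj (v b) * A b a * v a
     + cnj (v b) * A b b * v b"
proof -
  have "qf I A v = qf {a,b} A v" by (rule qf_subset) (use assms in auto)
  then show ?thesis using assms(4) by (simp add: qf_def)
qed

lemma qf_one:
  assumes "finite I" "a \<in> I" "\<And>i. i \<in> I \<Longrightarrow> i \<noteq> a \<Longrightarrow> v i = 0"
  shows "qf I A v = cnj (v a) * A a a * v a"
proof -
  have "qf I A v = qf {a} A v" by (rule qf_subset) (use assms in auto)
  then show ?thesis by (simp add: qf_def)
qed

lemma psd_diag:
  assumes "finite I" "psd_on I A" "a \<in> I"
  shows "Im (A a a) = 0" "0 \<le> Re (A a a)"
proof -
  let ?v = "\<lambda>i. if i = a then 1 else (0::complex)"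
  have "qf I A ?v = A a a" using qf_one[OF assms(1,3), of ?v A] by simp
  then show "Im (A a a) = 0" "0 \<le> Re (A a a)" using assms(2) unfolding psd_on_qf by metis+
qed

lemma psd_hermitian:
  assumes "finite I" "psd_on I A" "a \<in> I" "b \<in> I"
  shows "A b a = cnj (A a b)"
proof (cases "a = b")
  case True
  then show ?thesis using psd_diag[OF assms(1,2,3)] by (simp add: complex_eq_iff)
next
  case False
  have ii: "\<And>x. \<i> * x * \<i> = - (x::complex)"
    by (metis complex_i_mult_minus mult.commute)
  let ?v = "\<lambda>i. if i = a then 1 else if i = b then 1 else (0::complex)"
  let ?w = "\<lambda>i. if i = a then 1 else if i = b then \<i> else (0::complex)"
  have "qf I A ?v = A a a + A a b + A b a + A b b"
    using qf_two[OF assms(1,3,4) False, of ?v A] False by simp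
  moreover have "qf I A ?w = A a a + A a b * \<i> - \<i> * A b a - \<i> * A b b * \<i>"
    using qf_two[OF assms(1,3,4) False, of ?w A] False by simp
  ultimately have "Im (A a a + A a b + A b a + A b b) = 0" "Im (A a a + A a b * \<i> - \<i> * A b a - \<i> * A b b * \<i>) = 0"
    using assms(2) unfolding psd_on_qf by metis+
  moreover have "Im (A a a) = 0" "Im (A b b) = 0" using psd_diag(1)[OF assms(1,2)] assms(3,4) by auto
  ultimately show ?thesis by (simp add: complex_eq_iff ii)
qed

lemma qf_sum: "qf I (\<lambda>i j. \<Sum>t\<in>T. B t i j) w = (\<Sum>t\<in>T. qf I (B t) w)"
  unfolding qf_def by (simp add: sum_distrib_left sum_distrib_right sum.swap[of _ T])

lemma qf_diff: "qf I (\<lambda>i j. A i j - B i j) w = qf I A w - qf I B w"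
  unfolding qf_def by (simp add: algebra_simps sum_subtractf)

lemma qf_scale: "qf I (\<lambda>i j. c * A i j) w = c * qf I A w"
  unfolding qf_def by (simp add: algebra_simps sum_distrib_left)

lemma qf_rank1: "qf I (\<lambda>i j. u i * cnj (u j)) w = cnj (\<Sum>j\<in>I. cnj (u j) * w j) * (\<Sum>j\<in>I. cnj (u j) * w j)"
  unfolding qf_def by (simp add: cnj_sum sum_product mult_ac)

lemma cnj_mult_self_Re: "Im (cnj z * z) = 0" "0 \<le> Re (cnj z * z)"
  by (auto simp: algebra_simps)

lemma psd_rank1_sum:
  assumes "\<forall>i\<in>I. \<forall>j\<in>I. A i j = (\<Sum>t\<in>T. v t i * cnj (v t j))"
  shows "psd_on I A"
  unfolding psd_on_qf
proof
  fix w
  have "qf I A w = qf I (\<lambda>i j. \<Sum>t\<in>T. v t i * cnj (v t j)) w"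
    by (rule qf_cong) (use assms in auto)
  also have "\<dots> = (\<Sum>t\<in>T. qf I (\<lambda>i j. v t i * cnj (v t j)) w)" by (rule qf_sum)
  finally have eq0: "qf I A w = (\<Sum>t\<in>T. qf I (\<lambda>i j. v t i * cnj (v t j)) w)" .
  define Z where "Z t = (\<Sum>j\<in>I. cnj (v t j) * w j)" for t
  have eq: "qf I A w = (\<Sum>t\<in>T. cnj (Z t) * Z t)"
    by (simp only: eq0 qf_rank1 Z_def)
  have h: "\<And>t. Im (cnj (Z t) * Z t) = 0" "\<And>t. 0 \<le> Re (cnj (Z t) * Z t)" by (rule cnj_mult_self_Re)+
  have "Im (qf I A w) = 0" unfolding eq Im_sum h(1) by simp
  moreover have "0 \<le> Re (qf I A w)" unfolding eq Re_sum by (rule sum_nonneg) (rule h(2))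
  ultimately show "Im (qf I A w) = 0 \<and> 0 \<le> Re (qf I A w)" by blast
qed

lemma psd_restrict:
  assumes "finite I" "J \<subseteq> I" "psd_on I A" shows "psd_on J A"
  unfolding psd_on_qf
proof
  fix w
  let ?w = "\<lambda>i. if i \<in> J then w i else (0::complex)"
  have "qf I A ?w = qf J A ?w" by (rule qf_subset) (use assms in auto)
  also have "\<dots> = qf J A w" by (rule qf_cong) auto
  finally show "Im (qf J A w) = 0 \<and> 0 \<le> Re (qf J A w)" using assms(3) unfolding psd_on_qf by metis
qed

lemma qf_zero_row:
  assumes "a \<in> I" "\<forall>j\<in>I. B a j = 0 \<and> B j a = 0" "\<And>i. i \<in> I \<Longrightarrow> i \<noteq> a \<Longrightarrow> w i = w' i"
  shows "qf I B w = qf I B w'"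
  unfolding qf_def
  by (intro sum.cong refl) (use assms in \<open>metis mult_zero_left mult_zero_right\<close>)

lemma psd_decomp:
  assumes "finite I" "psd_on I A"
  shows "\<exists>(N::nat) v. \<forall>i\<in>I. \<forall>j\<in>I. A i j = (\<Sum>t<N. v t i * cnj (v t j))"
  using assms
proof (induction I arbitrary: A rule: finite_induct)
  case empty
  then show ?case by auto
next
  case (insert a J)
  let ?I = "insert a J"
  have fin: "finite ?I" using insert by auto
  have extend: "\<exists>(N::nat) v. \<forall>i\<in>?I. \<forall>j\<in>?I. B i j = (\<Sum>t<N. v t i * cnj (v t j))"
    if B0: "\<forall>j\<in>?I. B a j = 0 \<and> B j a = 0" and Bp: "psd_on ?I B" for B
  proof -
    have "psd_on J B" by (rule psd_restrict[OF fin _ Bp]) auto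
    from insert.IH[OF this] obtain N :: nat and v where v: "\<forall>i\<in>J. \<forall>j\<in>J. B i j = (\<Sum>t<N. v t i * cnj (v t j))"
      by blast
    show ?thesis
    proof (intro exI ballI)
      fix i j assume ij: "i \<in> ?I" "j \<in> ?I"
      show "B i j = (\<Sum>t<N. ((v t)(a := 0)) i * cnj (((v t)(a := 0)) j))"
      proof (cases "i = a \<or> j = a")
        case True then show ?thesis using B0 ij by auto
      next
        case False then show ?thesis using v ij by auto
      qed
    qed
  qed
  have herm: "\<And>i j. i \<in> ?I \<Longrightarrow> j \<in> ?I \<Longrightarrow> A j i = cnj (A i j)"
    using psd_hermitian[OF fin insert.prems] by blast
  have aI: "a \<in> ?I" by simp
  define \<alpha> where "\<alpha> = Re (A a a)"
  have \<alpha>0: "0 \<le> \<alpha>" and \<alpha>c: "A a a = complex_of_real \<alpha>"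
    using psd_diag[OF fin insert.prems aI] unfolding \<alpha>_def by (auto simp: complex_eq_iff)
  show ?case
  proof (cases "\<alpha> = 0")
    case True
    have row0: "A a j = 0" if j: "j \<in> J" for j
    proof (rule ccontr)
      assume nz: "A a j \<noteq> 0"
      define z where "z = A a j"
      have ja: "j \<noteq> a" using j insert.hyps by auto
      define n2 where "n2 = (Re z)^2 + (Im z)^2"
      have n2p: "n2 > 0" using nz unfolding n2_def z_def
        by (simp add: complex_eq_iff sum_power2_gt_zero_iff)
      define r where "r = (\<bar>Re (A j j)\<bar> + 1) / (2 * n2)"
      define s where "s = - (complex_of_real r) * z"
      let ?v = "\<lambda>i. if i = a then s else if i = j then 1 else (0::complex)"
      have "qf ?I A ?v = cnj s * A a a * s + cnj s * A a j + A j a * s + A j j"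
        using qf_two[OF fin aI _ ja[symmetric], of ?v A] j ja by auto
      also have "\<dots> = cnj s * z + cnj z * s + A j j"
        using \<alpha>c True herm[of a j] j unfolding z_def by simp
      also have "cnj s * z = - complex_of_real (r * n2)"
        unfolding s_def n2_def by (simp add: complex_eq_iff power2_eq_square algebra_simps)
      also have "cnj z * s = - complex_of_real (r * n2)"
        unfolding s_def n2_def by (simp add: complex_eq_iff power2_eq_square algebra_simps)
      finally have "Re (qf ?I A ?v) = Re (A j j) - 2 * r * n2" by simp
      also have "\<dots> = Re (A j j) - (\<bar>Re (A j j)\<bar> + 1)" unfolding r_def using n2p by (simp add: field_simps)
      also have "\<dots> < 0" by simp
      finally show False using insert.prems unfolding psd_on_qf by (metis not_le)
    qed
    have "\<forall>j\<in>?I. A a j = 0 \<and> A j a = 0"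
    proof
      fix j assume j: "j \<in> ?I"
      show "A a j = 0 \<and> A j a = 0"
      proof (cases "j = a")
        case True then show ?thesis using \<alpha>c \<open>\<alpha> = 0\<close> by simp
      next
        case False then have "A a j = 0" using row0 j by auto
        then show ?thesis using herm[OF aI j] by simp
      qed
    qed
    then show ?thesis using extend insert.prems by blast
  next
    case False
    then have \<alpha>p: "\<alpha> > 0" using \<alpha>0 by simp
    define sa where "sa = sqrt \<alpha>"
    have sap: "sa > 0" unfolding sa_def using \<alpha>p by simp
    have sasa: "sa * sa = \<alpha>" unfolding sa_def using \<alpha>0 by simp
    define u where "u i = A i a / complex_of_real sa" for i
    define B where "B i j = A i j - u i * cnj (u j)" for i j
    have cu: "cnj (u j) = A a j / complex_of_real sa" if "j \<in> ?I" for j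
      unfolding u_def using herm[OF that aI] by simp
    have ua: "u a = complex_of_real sa"
      unfolding u_def \<alpha>c using sap by (simp add: sasa[symmetric] field_simps)
    have B0: "\<forall>j\<in>?I. B a j = 0 \<and> B j a = 0"
    proof
      fix j assume j: "j \<in> ?I"
      have "B a j = A a j - complex_of_real sa * (A a j / complex_of_real sa)"
        unfolding B_def ua cu[OF j] ..
      moreover have "B j a = A j a - (A j a / complex_of_real sa) * complex_of_real sa"
        by (simp only: B_def ua complex_cnj_complex_of_real) (simp add: u_def)
      ultimately show "B a j = 0 \<and> B j a = 0" using sap by simp
    qed
    have Bp: "psd_on ?I B"
      unfolding psd_on_qf
    proof
      fix w
      let ?w = "w(a := - (\<Sum>i\<in>J. A a i * w i) / A a a)"
      have "qf ?I B w = qf ?I B ?w" by (rule qf_zero_row[OF aI B0]) auto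
      also have "\<dots> = qf ?I A ?w - qf ?I (\<lambda>i j. u i * cnj (u j)) ?w"
        unfolding B_def by (rule qf_diff)
      also have "(\<Sum>j\<in>?I. cnj (u j) * ?w j) = 0"
      proof -
        have "(\<Sum>j\<in>?I. cnj (u j) * ?w j) = (\<Sum>j\<in>?I. A a j * ?w j) / complex_of_real sa"
          by (simp add: cu sum_divide_distrib del: fun_upd_apply)
        also have "(\<Sum>j\<in>?I. A a j * ?w j) = A a a * ?w a + (\<Sum>j\<in>J. A a j * w j)"
          using insert.hyps by (simp add: sum.insert) (intro sum.cong, auto)
        also have "\<dots> = 0" using \<alpha>c \<alpha>p by simp
        finally show ?thesis by simp
      qed
      then have "qf ?I (\<lambda>i j. u i * cnj (u j)) ?w = 0" unfolding qf_rank1 by simp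
      finally have eqB: "qf ?I B w = qf ?I A ?w" by (simp only: diff_zero)
      show "Im (qf ?I B w) = 0 \<and> 0 \<le> Re (qf ?I B w)"
        unfolding eqB using insert.prems unfolding psd_on_qf by blast
    qed
    obtain N :: nat and v where v: "\<forall>i\<in>?I. \<forall>j\<in>?I. B i j = (\<Sum>t<N. v t i * cnj (v t j))"
      using extend[OF B0 Bp] by blast
    show ?thesis
    proof (intro exI ballI)
      fix i j assume ij: "i \<in> ?I" "j \<in> ?I"
      show "A i j = (\<Sum>t<Suc N. (v(N := u)) t i * cnj ((v(N := u)) t j))"
      proof -
        have h: "A i j - u i * cnj (u j) = (\<Sum>t<N. v t i * cnj (v t j))" using v ij unfolding B_def by blast
        show ?thesis using h by (simp add: diff_eq_eq)
      qed
    qed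
  qed
qed



lemma trace_mmult_cong:
  "(\<And>i j. i \<in> I \<Longrightarrow> j \<in> I \<Longrightarrow> A i j = A' i j) \<Longrightarrow> (\<And>i j. i \<in> I \<Longrightarrow> j \<in> I \<Longrightarrow> B i j = B' i j)
   \<Longrightarrow> trace_on I (mmult I A B) = trace_on I (mmult I A' B')"
  unfolding trace_on_def mmult_def by (intro sum.cong refl) auto

lemma trace_mmult_comm: "trace_on I (mmult I A B) = trace_on I (mmult I B A)"
  unfolding trace_on_def mmult_def by (subst sum.swap) (simp add: mult.commute)

lemma trace_rank1: "trace_on I (mmult I A (\<lambda>i j. u i * cnj (u j))) = qf I A u"
  unfolding trace_on_def mmult_def qf_def by (simp add: sum_distrib_left mult_ac)

lemma trace_mmult_sum_right:
  "trace_on I (mmult I A (\<lambda>i j. \<Sum>t\<in>T. B t i j)) = (\<Sum>t\<in>T. trace_on I (mmult I A (B t)))"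
  unfolding trace_on_def mmult_def by (simp add: sum_distrib_left sum.swap[of _ T])

lemma trace_mmult_sum_left:
  "trace_on I (mmult I (\<lambda>i j. \<Sum>t\<in>T. B t i j) A) = (\<Sum>t\<in>T. trace_on I (mmult I (B t) A))"
  by (simp add: trace_mmult_comm[of I _ A] trace_mmult_sum_right)

lemma trace_mmult_diff_left:
  "trace_on I (mmult I (\<lambda>i j. B i j - C i j) A) = trace_on I (mmult I B A) - trace_on I (mmult I C A)"
  unfolding trace_on_def mmult_def by (simp add: algebra_simps sum_subtractf)

lemma trace_mmult_diff_right:
  "trace_on I (mmult I A (\<lambda>i j. B i j - C i j)) = trace_on I (mmult I A B) - trace_on I (mmult I A C)"
  unfolding trace_on_def mmult_def by (simp add: algebra_simps sum_subtractf)

lemma trace_mmult_scale_left: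
  "trace_on I (mmult I (\<lambda>i j. c * B i j) A) = c * trace_on I (mmult I B A)"
  unfolding trace_on_def mmult_def by (simp add: algebra_simps sum_distrib_left)

lemma trace_mmult_scale_right:
  "trace_on I (mmult I A (\<lambda>i j. c * B i j)) = c * trace_on I (mmult I A B)"
  unfolding trace_on_def mmult_def by (simp add: algebra_simps sum_distrib_left)

lemma if_zero_mult: "(if P then a else 0) * b = (if P then a * b else (0::complex))"
  "b * (if P then a else 0) = (if P then b * a else (0::complex))"
  by auto

lemma idop_mult: "idop i j * x = (if i = j then x else 0)" "x * idop i j = (if i = j then x else 0)"
  "cnj (idop i j) = idop i j" "idop i j = idop j i"
  by (auto simp: idop_def)

lemma trace_mmult_idop: "finite I \<Longrightarrow> trace_on I (mmult I A idop) = trace_on I A"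
  unfolding trace_on_def mmult_def by (simp add: idop_mult)

lemma tr_psd:
  assumes "finite I" "psd_on I A" "psd_on I B"
  shows "Im (trace_on I (mmult I A B)) = 0 \<and> 0 \<le> Re (trace_on I (mmult I A B))"
proof -
  obtain N :: nat and v where v: "\<forall>i\<in>I. \<forall>j\<in>I. B i j = (\<Sum>t<N. v t i * cnj (v t j))"
    using psd_decomp[OF assms(1,3)] by blast
  have "trace_on I (mmult I A B) = trace_on I (mmult I A (\<lambda>i j. \<Sum>t<N. v t i * cnj (v t j)))"
    by (rule trace_mmult_cong) (use v in auto)
  also have "\<dots> = (\<Sum>t<N. qf I A (v t))" by (simp add: trace_mmult_sum_right trace_rank1)
  finally have eq: "trace_on I (mmult I A B) = (\<Sum>t<N. qf I A (v t))" .
  have "\<And>t. Im (qf I A (v t)) = 0" "\<And>t. 0 \<le> Re (qf I A (v t))" using assms(2) unfolding psd_on_qf by auto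
  then show ?thesis unfolding eq Im_sum Re_sum by (auto intro: sum_nonneg)
qed

lemma idop_psd: "finite I \<Longrightarrow> psd_on I idop"
  by (rule psd_rank1_sum[where T=I and v="\<lambda>t i. idop t i"]) (auto simp: idop_def if_zero_mult)

lemma qf_sandwich:
  "qf I (sandwich I' K P) v = qf I' P (\<lambda>i'. \<Sum>i\<in>I. K i' i * v i)"
proof -
  have "qf I (sandwich I' K P) v =
     (\<Sum>i\<in>I. \<Sum>j\<in>I. \<Sum>f'\<in>I'. \<Sum>g'\<in>I'. cnj (K f' i * v i) * P f' g' * (K g' j * v j))"
    unfolding qf_def sandwich_def by (simp add: sum_distrib_left sum_distrib_right mult_ac)
  also have "\<dots> = (\<Sum>f'\<in>I'. \<Sum>g'\<in>I'. \<Sum>i\<in>I. \<Sum>j\<in>I. cnj (K f' i * v i) * P f' g' * (K g' j * v j))"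
    by (subst sum.swap, subst (2) sum.swap, subst (3) sum.swap, subst (2) sum.swap) (rule refl)
  also have "\<dots> = qf I' P (\<lambda>i'. \<Sum>i\<in>I. K i' i * v i)"
    unfolding qf_def by (simp add: cnj_sum sum_distrib_left sum_distrib_right mult_ac)
  finally show ?thesis .
qed

lemma psd_sandwich: "psd_on I' P \<Longrightarrow> psd_on I (sandwich I' K P)"
  unfolding psd_on_qf qf_sandwich by blast

lemma sandwich_sum:
  "sandwich I' K (\<lambda>i j. \<Sum>t\<in>T. P t i j) f g = (\<Sum>t\<in>T. sandwich I' K (P t) f g)"
  unfolding sandwich_def by (simp add: sum_distrib_left sum_distrib_right sum.swap[of _ T])

lemma sandwich_cong:
  "(\<And>i j. i \<in> I' \<Longrightarrow> j \<in> I' \<Longrightarrow> P i j = P' i j) \<Longrightarrow> sandwich I' K P f g = sandwich I' K P' f g"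
  unfolding sandwich_def by (intro sum.cong refl) auto

lemma sandwich_idop_left:
  assumes "finite I" "f \<in> I" "g \<in> I"
  shows "sandwich I idop P f g = P f g"
  using assms unfolding sandwich_def by (simp add: idop_mult)

lemma sandwich_idop_mid:
  "finite I' \<Longrightarrow> sandwich I' K idop f g = (\<Sum>i\<in>I'. cnj (K i f) * K i g)"
  unfolding sandwich_def by (simp add: idop_mult if_zero_mult)



lemma gidx_finite: "(\<And>k. k < m \<Longrightarrow> finite (S k)) \<Longrightarrow> finite (gidx m S)"
  unfolding gidx_def by (rule finite_PiE) auto

lemma sum_gidx_prod:
  assumes "\<And>k. k < m \<Longrightarrow> finite (S k)"
  shows "(\<Sum>f\<in>gidx m S. \<Prod>k<m. h k (f k)) = (\<Prod>k<m. \<Sum>i\<in>S k. h k i :: complex)"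
  unfolding gidx_def by (rule prod_sum_PiE[symmetric]) (use assms in auto)

lemma T_sand:
  assumes "\<And>k. k < m \<Longrightarrow> finite (S' k)"
  shows "sandwich (gidx m S') (ptensor m K) (ptensor m B) f g = ptensor m (\<lambda>k. sandwich (S' k) (K k) (B k)) f g"
proof -
  have "sandwich (gidx m S') (ptensor m K) (ptensor m B) f g =
     (\<Sum>f'\<in>gidx m S'. \<Sum>g'\<in>gidx m S'. \<Prod>k<m. cnj (K k (f' k) (f k)) * B k (f' k) (g' k) * K k (g' k) (g k))"
    unfolding sandwich_def ptensor_def by (simp add: prod.distrib cnj_prod)
  also have "\<dots> = (\<Sum>f'\<in>gidx m S'. \<Prod>k<m. \<Sum>j\<in>S' k. cnj (K k (f' k) (f k)) * B k (f' k) j * K k j (g k))"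
    by (intro sum.cong refl sum_gidx_prod assms)
  also have "\<dots> = (\<Prod>k<m. \<Sum>i\<in>S' k. \<Sum>j\<in>S' k. cnj (K k i (f k)) * B k i j * K k j (g k))"
    by (rule sum_gidx_prod[where h="\<lambda>k i. \<Sum>j\<in>S' k. cnj (K k i (f k)) * B k i j * K k j (g k)"]) (rule assms)
  finally show ?thesis unfolding ptensor_def sandwich_def .
qed

lemma idop_ptensor:
  assumes "f \<in> gidx m S" "g \<in> gidx m S"
  shows "idop f g = ptensor m (\<lambda>_. idop) f g"
proof (cases "f = g")
  case True then show ?thesis by (simp add: idop_def ptensor_def)
next
  case False
  then obtain k where "f k \<noteq> g k" by auto
  moreover have "k < m"
  proof (rule ccontr)
    assume "\<not> k < m"
    then have "f k = undefined" "g k = undefined" using assms unfolding gidx_def PiE_def extensional_def by auto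
    then show False using \<open>f k \<noteq> g k\<close> by simp
  qed
  ultimately show ?thesis using False unfolding ptensor_def idop_def
    by (auto intro!: prod_zero[of _ "\<lambda>k. if f k = g k then 1 else 0"])
qed

lemma loc_lift_ptensor:
  assumes "k < m"
  shows "loc_lift m k K = ptensor m (\<lambda>k'. if k' = k then K else idop)"
proof (intro ext)
  fix f' f
  have "ptensor m (\<lambda>k'. if k' = k then K else idop) f' f
      = (if k = k then K else idop) (f' k) (f k) * (\<Prod>k'\<in>{..<m} - {k}. (if k' = k then K else idop) (f' k') (f k'))"
    unfolding ptensor_def by (rule prod.remove) (use assms in auto)
  also have "(\<Prod>k'\<in>{..<m} - {k}. (if k' = k then K else idop) (f' k') (f k')) = (\<Prod>k'\<in>{..<m} - {k}. idop (f' k') (f k'))"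
    by (rule prod.cong) auto
  also have "(if k = k then K else idop) (f' k) (f k) * (\<Prod>k'\<in>{..<m} - {k}. idop (f' k') (f k')) = loc_lift m k K f' f"
    unfolding loc_lift_def by simp
  finally show "loc_lift m k K f' f = ptensor m (\<lambda>k'. if k' = k then K else idop) f' f" ..
qed

lemma ptensor_cong:
  assumes "\<And>k i j. k < m \<Longrightarrow> i \<in> S k \<Longrightarrow> j \<in> S k \<Longrightarrow> A k i j = B k i j" "f \<in> gidx m S" "g \<in> gidx m S"
  shows "ptensor m A f g = ptensor m B f g"
  unfolding ptensor_def using assms(2,3) by (intro prod.cong refl assms(1)) (auto simp: gidx_def PiE_iff)

lemma gidx_mem: "f \<in> gidx m S \<Longrightarrow> k < m \<Longrightarrow> f k \<in> S k"
  unfolding gidx_def by auto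

subsection \<open>Separable operators\<close>

lemma sep_cong:
  assumes "\<And>f g. f \<in> gidx m S \<Longrightarrow> g \<in> gidx m S \<Longrightarrow> E f g = E' f g"
  shows "sep_op m S E \<longleftrightarrow> sep_op m S E'"
  unfolding sep_op_def using assms by simp

lemma sep_zero: "sep_op m S (\<lambda>_ _. 0)"
  unfolding sep_op_def by (intro exI[of _ 0]) auto

lemma sum_lessThan_add_nat: "(\<Sum>t<N1 + N2. h t) = (\<Sum>t<N1. h t) + (\<Sum>t<N2. h (N1 + t))"
  for h :: "nat \<Rightarrow> 'b::comm_monoid_add"
  by (induction N2) (auto simp: ac_simps)

lemma sep_add:
  assumes "sep_op m S E1" "sep_op m S E2"
  shows "sep_op m S (\<lambda>f g. E1 f g + E2 f g)"
proof -
  obtain N1 :: nat and A1 where 1: "\<forall>t<N1. \<forall>k<m. psd_on (S k) (A1 t k)"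
    "\<forall>f\<in>gidx m S. \<forall>g\<in>gidx m S. E1 f g = (\<Sum>t<N1. ptensor m (A1 t) f g)"
    using assms(1) unfolding sep_op_def by blast
  obtain N2 :: nat and A2 where 2: "\<forall>t<N2. \<forall>k<m. psd_on (S k) (A2 t k)"
    "\<forall>f\<in>gidx m S. \<forall>g\<in>gidx m S. E2 f g = (\<Sum>t<N2. ptensor m (A2 t) f g)"
    using assms(2) unfolding sep_op_def by blast
  define A where "A t = (if t < N1 then A1 t else A2 (t - N1))" for t
  have split: "(\<Sum>t<N1 + N2. ptensor m (A t) f g) = (\<Sum>t<N1. ptensor m (A1 t) f g) + (\<Sum>t<N2. ptensor m (A2 t) f g)" for f g
    unfolding A_def sum_lessThan_add_nat by simp
  show ?thesis unfolding sep_op_def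
  proof (intro exI conjI allI impI ballI)
    show "\<And>t k. t < N1 + N2 \<Longrightarrow> k < m \<Longrightarrow> psd_on (S k) (A t k)"
      using 1(1) 2(1) unfolding A_def by auto
    show "\<And>f g. f \<in> gidx m S \<Longrightarrow> g \<in> gidx m S \<Longrightarrow> E1 f g + E2 f g = (\<Sum>t<N1 + N2. ptensor m (A t) f g)"
      using 1(2) 2(2) split by simp
  qed
qed

lemma sep_sum:
  assumes "finite T" "\<forall>t\<in>T. sep_op m S (E t)"
  shows "sep_op m S (\<lambda>f g. \<Sum>t\<in>T. E t f g)"
  using assms
proof (induction T rule: finite_induct)
  case empty then show ?case using sep_zero by simp
next
  case (insert x F)
  then show ?case using sep_add[of m S "E x" "\<lambda>f g. \<Sum>t\<in>F. E t f g"] by simp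
qed

lemma sep_ptensor:
  assumes "\<forall>k<m. psd_on (S k) (A k)"
  shows "sep_op m S (ptensor m A)"
  unfolding sep_op_def by (rule exI[of _ 1], rule exI[of _ "\<lambda>_. A"]) (use assms in auto)

lemma sep_sandwich:
  assumes km: "k < m" and fin: "\<And>k. k < m \<Longrightarrow> finite (S k)" "finite S'"
    and sep: "sep_op m (S(k := S')) P"
  shows "sep_op m S (sandwich (gidx m (S(k := S'))) (loc_lift m k K) P)"
proof -
  let ?S = "S(k := S')"
  let ?K = "\<lambda>k'. if k' = k then K else idop"
  obtain N :: nat and A where A: "\<forall>t<N. \<forall>k<m. psd_on (?S k) (A t k)"
    "\<forall>f\<in>gidx m ?S. \<forall>g\<in>gidx m ?S. P f g = (\<Sum>t<N. ptensor m (A t) f g)"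
    using sep unfolding sep_op_def by blast
  have finS: "\<And>k'. k' < m \<Longrightarrow> finite (?S k')" using fin by auto
  have eq: "sandwich (gidx m ?S) (loc_lift m k K) P f g =
      (\<Sum>t<N. ptensor m (\<lambda>k'. sandwich (?S k') (?K k') (A t k')) f g)" for f g
  proof -
    have "sandwich (gidx m ?S) (loc_lift m k K) P f g =
        sandwich (gidx m ?S) (loc_lift m k K) (\<lambda>f g. \<Sum>t<N. ptensor m (A t) f g) f g"
      by (rule sandwich_cong) (use A(2) in auto)
    also have "\<dots> = (\<Sum>t<N. sandwich (gidx m ?S) (ptensor m ?K) (ptensor m (A t)) f g)"
      unfolding sandwich_sum loc_lift_ptensor[OF km] ..
    also have "\<dots> = (\<Sum>t<N. ptensor m (\<lambda>k'. sandwich (?S k') (?K k') (A t k')) f g)"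
      by (intro sum.cong refl T_sand finS)
    finally show ?thesis .
  qed
  show ?thesis unfolding sep_op_def
  proof (intro exI conjI)
    show "\<forall>t<N. \<forall>k'<m. psd_on (S k') (sandwich (?S k') (?K k') (A t k'))"
    proof (intro allI impI)
      fix t k' assume "t < N" "k' < m"
      then have "psd_on (?S k') (A t k')" using A(1) by blast
      then show "psd_on (S k') (sandwich (?S k') (?K k') (A t k'))" by (rule psd_sandwich)
    qed
    show "\<forall>f\<in>gidx m S. \<forall>g\<in>gidx m S. sandwich (gidx m ?S) (loc_lift m k K) P f g =
        (\<Sum>t<N. ptensor m (\<lambda>k'. sandwich (?S k') (?K k') (A t k')) f g)"
      using eq by blast
  qed
qed

lemma sum_Cons_UNION:
  assumes "finite A" "\<forall>a\<in>A. finite (Os a)"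
  shows "(\<Sum>w\<in>(\<Union>a\<in>A. Cons a ` Os a). h w) = (\<Sum>a\<in>A. \<Sum>w\<in>Os a. h (a # w))"
proof -
  have "(\<Sum>w\<in>(\<Union>a\<in>A. Cons a ` Os a). h w) = (\<Sum>a\<in>A. \<Sum>w\<in>Cons a ` Os a. h w)"
    by (rule sum.UNION_disjoint) (use assms in auto)
  also have "\<dots> = (\<Sum>a\<in>A. \<Sum>w\<in>Os a. h (a # w))"
  proof (rule sum.cong[OF refl])
    fix a
    have "inj_on (Cons a) (Os a)" by (auto simp: inj_on_def)
    then show "(\<Sum>w\<in>Cons a ` Os a. h w) = (\<Sum>w\<in>Os a. h (a # w))" by (simp add: sum.reindex)
  qed
  finally show ?thesis .
qed

lemma loccp_props:
  assumes "loccp m S Ws P" "\<And>k. k < m \<Longrightarrow> finite (S k)"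
  shows "finite Ws \<and> (\<forall>w\<in>Ws. sep_op m S (P w) \<and> psd_on (gidx m S) (P w)) \<and>
    (\<forall>f\<in>gidx m S. \<forall>g\<in>gidx m S. (\<Sum>w\<in>Ws. P w f g) = idop f g)"
  using assms
proof (induction rule: loccp.induct)
  case (triv S)
  have "sep_op m S (ptensor m (\<lambda>_. idop))" by (rule sep_ptensor) (use triv idop_psd in auto)
  then have "sep_op m S idop" by (subst sep_cong[where E'="ptensor m (\<lambda>_. idop)"]) (auto intro: idop_ptensor)
  then show ?case using idop_psd[OF gidx_finite[OF triv]] by auto
next
  case (step k A S' S K Os Ps)
  let ?S = "S(k := S')"
  let ?G = "gidx m ?S"
  have finS: "\<And>k'. k' < m \<Longrightarrow> finite (?S k')" using step by auto
  have IH: "\<And>a. a \<in> A \<Longrightarrow> finite (Os a) \<and> (\<forall>w\<in>Os a. sep_op m ?S (Ps a w) \<and> psd_on ?G (Ps a w)) \<and>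
    (\<forall>f\<in>?G. \<forall>g\<in>?G. (\<Sum>w\<in>Os a. Ps a w f g) = idop f g)"
    using step.IH finS by blast
  let ?P = "\<lambda>w. sandwich ?G (loc_lift m k (K (hd w))) (Ps (hd w) (tl w))"
  have fin: "finite (\<Union>a\<in>A. Cons a ` Os a)" using IH step.hyps by auto
  have el: "\<forall>w\<in>(\<Union>a\<in>A. Cons a ` Os a). sep_op m S (?P w) \<and> psd_on (gidx m S) (?P w)"
  proof
    fix w assume "w \<in> (\<Union>a\<in>A. Cons a ` Os a)"
    then obtain a w' where w: "a \<in> A" "w' \<in> Os a" "w = a # w'" by auto
    show "sep_op m S (?P w) \<and> psd_on (gidx m S) (?P w)"
    proof -
      have "sep_op m ?S (Ps a w')" "psd_on ?G (Ps a w')" using IH[OF w(1)] w(2) by auto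
      then show ?thesis
        using w(3) sep_sandwich[where P="Ps a w'", OF step.hyps(1) step.prems step.hyps(3)] psd_sandwich by auto
    qed
  qed
  have su: "(\<Sum>w\<in>(\<Union>a\<in>A. Cons a ` Os a). ?P w f g) = idop f g" if fg: "f \<in> gidx m S" "g \<in> gidx m S" for f g
  proof -
    let ?K = "\<lambda>a k'. if k' = k then K a else idop"
    have "(\<Sum>w\<in>(\<Union>a\<in>A. Cons a ` Os a). ?P w f g) = (\<Sum>a\<in>A. \<Sum>w\<in>Os a. ?P (a # w) f g)"
      by (rule sum_Cons_UNION) (use IH step.hyps in auto)
    also have "\<dots> = (\<Sum>a\<in>A. sandwich ?G (loc_lift m k (K a)) (\<lambda>f g. \<Sum>w\<in>Os a. Ps a w f g) f g)"
      by (simp add: sandwich_sum)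
    also have "\<dots> = (\<Sum>a\<in>A. sandwich ?G (ptensor m (?K a)) (ptensor m (\<lambda>_. idop)) f g)"
      unfolding loc_lift_ptensor[OF step.hyps(1)]
      by (intro sum.cong refl sandwich_cong) (use IH idop_ptensor in auto)
    also have "\<dots> = (\<Sum>a\<in>A. ptensor m (\<lambda>k'. sandwich (?S k') (?K a k') idop) f g)"
      by (intro sum.cong refl T_sand finS)
    also have "\<dots> = (\<Sum>a\<in>A. (\<Sum>i\<in>S'. cnj (K a i (f k)) * K a i (g k)) * (\<Prod>k'\<in>{..<m} - {k}. idop (f k') (g k')))"
    proof (intro sum.cong refl)
      fix a assume "a \<in> A"
      have "ptensor m (\<lambda>k'. sandwich (?S k') (?K a k') idop) f g =
          sandwich (?S k) (?K a k) idop (f k) (g k) * (\<Prod>k'\<in>{..<m} - {k}. sandwich (?S k') (?K a k') idop (f k') (g k'))"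
        unfolding ptensor_def by (rule prod.remove) (use step.hyps in auto)
      also have "(\<Prod>k'\<in>{..<m} - {k}. sandwich (?S k') (?K a k') idop (f k') (g k')) = (\<Prod>k'\<in>{..<m} - {k}. idop (f k') (g k'))"
        by (rule prod.cong) (use fg step.prems in \<open>auto intro!: sandwich_idop_left gidx_mem\<close>)
      also have "sandwich (?S k) (?K a k) idop (f k) (g k) = (\<Sum>i\<in>S'. cnj (K a i (f k)) * K a i (g k))"
        using sandwich_idop_mid step.hyps by auto
      finally show "ptensor m (\<lambda>k'. sandwich (?S k') (?K a k') idop) f g = (\<Sum>i\<in>S'. cnj (K a i (f k)) * K a i (g k)) * (\<Prod>k'\<in>{..<m} - {k}. idop (f k') (g k'))" .
    qed
    also have "\<dots> = (\<Sum>a\<in>A. \<Sum>i\<in>S'. cnj (K a i (f k)) * K a i (g k)) * (\<Prod>k'\<in>{..<m} - {k}. idop (f k') (g k'))"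
      by (simp add: sum_distrib_right)
    also have "(\<Sum>a\<in>A. \<Sum>i\<in>S'. cnj (K a i (f k)) * K a i (g k)) = idop (f k) (g k)"
      using step.hyps(4) fg step.hyps(1) gidx_mem unfolding kraus_complete_def by blast
    also have "idop (f k) (g k) * (\<Prod>k'\<in>{..<m} - {k}. idop (f k') (g k')) = ptensor m (\<lambda>_. idop) f g"
      unfolding ptensor_def by (rule prod.remove[symmetric]) (use step.hyps in auto)
    also have "\<dots> = idop f g" using idop_ptensor fg by metis
    finally show ?thesis .
  qed
  show ?case using fin el su by blast
qed



lemma psd_sum: "finite T \<Longrightarrow> \<forall>t\<in>T. psd_on I (A t) \<Longrightarrow> psd_on I (\<lambda>i j. \<Sum>t\<in>T. A t i j)"
  unfolding psd_on_qf qf_sum by (auto simp: Im_sum Re_sum intro: sum_nonneg)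

lemma psd_trace_zero:
  assumes "finite I" "psd_on I M" "Re (trace_on I M) = 0" "i \<in> I" "j \<in> I"
  shows "M i j = 0"
proof -
  obtain N :: nat and v where v: "\<forall>i\<in>I. \<forall>j\<in>I. M i j = (\<Sum>t<N. v t i * cnj (v t j))"
    using psd_decomp[OF assms(1,2)] by blast
  have "Re (trace_on I M) = (\<Sum>i\<in>I. \<Sum>t<N. (Re (v t i))^2 + (Im (v t i))^2)"
    unfolding trace_on_def using v by (simp add: Re_sum power2_eq_square)
  then have z: "(\<Sum>i\<in>I. \<Sum>t<N. (Re (v t i))^2 + (Im (v t i))^2) = 0" using assms(3) by simp
  have "\<forall>i\<in>I. (\<Sum>t<N. (Re (v t i))^2 + (Im (v t i))^2) = 0"
    using z assms(1) by (subst (asm) sum_nonneg_eq_0_iff) (auto intro!: sum_nonneg)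
  then have "\<forall>i\<in>I. \<forall>t<N. (Re (v t i))^2 + (Im (v t i))^2 = 0"
    by (subst (asm) sum_nonneg_eq_0_iff) auto
  then have "\<forall>i\<in>I. \<forall>t<N. v t i = 0"
    by (auto simp: complex_eq_iff add_nonneg_eq_0_iff)
  then show ?thesis using v assms(4,5) by simp
qed

lemma locc_povm_props:
  assumes "locc_povm m S C M" "finite C" "\<And>k. k < m \<Longrightarrow> finite (S k)"
  shows "povm_on (gidx m S) C M \<and> sep_povm m S C M"
proof -
  obtain Ws P and g :: "nat list \<Rightarrow> 'b" where W: "loccp m S Ws P" "g ` Ws \<subseteq> C"
    "\<forall>c\<in>C. \<forall>f\<in>gidx m S. \<forall>h\<in>gidx m S. M c f h = (\<Sum>w\<in>{w\<in>Ws. g w = c}. P w f h)"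
    using assms(1) unfolding locc_povm_def by blast
  have L: "finite Ws" "\<forall>w\<in>Ws. sep_op m S (P w) \<and> psd_on (gidx m S) (P w)"
    "\<forall>f\<in>gidx m S. \<forall>g\<in>gidx m S. (\<Sum>w\<in>Ws. P w f g) = idop f g"
    using loccp_props[OF W(1) assms(3)] by blast+
  have psd: "psd_on (gidx m S) (M c)" if "c \<in> C" for c
  proof -
    have "psd_on (gidx m S) (\<lambda>f h. \<Sum>w\<in>{w\<in>Ws. g w = c}. P w f h)"
      by (rule psd_sum) (use L in auto)
    then show ?thesis using W(3) that by (subst psd_on_cong) auto
  qed
  have sep: "sep_op m S (M c)" if "c \<in> C" for c
  proof -
    have "sep_op m S (\<lambda>f h. \<Sum>w\<in>{w\<in>Ws. g w = c}. P w f h)"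
      by (rule sep_sum) (use L in auto)
    then show ?thesis using W(3) that by (subst sep_cong) auto
  qed
  have sum: "(\<Sum>c\<in>C. M c f h) = idop f h" if "f \<in> gidx m S" "h \<in> gidx m S" for f h
  proof -
    have "(\<Sum>c\<in>C. M c f h) = (\<Sum>c\<in>C. \<Sum>w\<in>{w\<in>Ws. g w = c}. P w f h)"
      using W(3) that by simp
    also have "\<dots> = (\<Sum>w\<in>Ws. P w f h)" by (rule sum.group) (use L W assms in auto)
    finally show ?thesis using L that by simp
  qed
  show ?thesis unfolding povm_on_def sep_povm_def using psd sep sum assms by blast
qed

lemma psucc_bound:
  assumes "povm_on (gidx m S) C M" "\<And>k. k < m \<Longrightarrow> finite (S k)"
    "\<forall>c\<in>C. 0 \<le> \<eta> c" "\<forall>c\<in>C. psd_on (gidx m S) (\<rho> c) \<and> trace_on (gidx m S) (\<rho> c) = 1"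
  shows "psucc (gidx m S) C \<eta> \<rho> M \<le> (\<Sum>c\<in>C. \<eta> c)"
proof -
  let ?G = "gidx m S"
  have finG: "finite ?G" by (rule gidx_finite) (use assms in auto)
  have finC: "finite C" using assms(1) unfolding povm_on_def by blast
  have le1: "Re (trace_on ?G (mmult ?G (\<rho> c) (M c))) \<le> 1" if c: "c \<in> C" for c
  proof -
    have "(\<Sum>c'\<in>C. trace_on ?G (mmult ?G (\<rho> c) (M c'))) = trace_on ?G (mmult ?G (\<rho> c) (\<lambda>i j. \<Sum>c'\<in>C. M c' i j))"
      by (simp add: trace_mmult_sum_right)
    also have "\<dots> = trace_on ?G (mmult ?G (\<rho> c) idop)"
      by (rule trace_mmult_cong) (use assms(1) in \<open>auto simp: povm_on_def\<close>)
    also have "\<dots> = 1" using trace_mmult_idop[OF finG] assms(4) c by simp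
    finally have s: "(\<Sum>c'\<in>C. Re (trace_on ?G (mmult ?G (\<rho> c) (M c')))) = 1"
      by (metis Re_sum one_complex.sel)
    have nn: "\<forall>c'\<in>C. 0 \<le> Re (trace_on ?G (mmult ?G (\<rho> c) (M c')))"
      using tr_psd[OF finG] assms(1,4) c unfolding povm_on_def by blast
    have "Re (trace_on ?G (mmult ?G (\<rho> c) (M c))) \<le> (\<Sum>c'\<in>C. Re (trace_on ?G (mmult ?G (\<rho> c) (M c'))))"
      by (rule member_le_sum) (use c nn finC in auto)
    then show ?thesis using s by simp
  qed
  show ?thesis unfolding psucc_def
    by (rule sum_mono) (use le1 assms(3) in \<open>auto intro: mult_left_le\<close>)
qed

lemma sep_idop: "(\<And>k. k < m \<Longrightarrow> finite (S k)) \<Longrightarrow> sep_op m S idop"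
proof -
  assume fin: "\<And>k. k < m \<Longrightarrow> finite (S k)"
  have "sep_op m S (ptensor m (\<lambda>_. idop))" by (rule sep_ptensor) (use fin idop_psd in auto)
  then show "sep_op m S idop" by (subst sep_cong[where E'="ptensor m (\<lambda>_. idop)"]) (auto intro: idop_ptensor)
qed

lemma sep_scale:
  assumes "sep_op m S E" "0 \<le> r" "0 < m"
  shows "sep_op m S (\<lambda>f g. complex_of_real r * E f g)"
proof -
  obtain N :: nat and A where A: "\<forall>t<N. \<forall>k<m. psd_on (S k) (A t k)"
    "\<forall>f\<in>gidx m S. \<forall>g\<in>gidx m S. E f g = (\<Sum>t<N. ptensor m (A t) f g)"
    using assms(1) unfolding sep_op_def by blast
  define A' where "A' t k = (if k = 0 then (\<lambda>i j. complex_of_real r * A t k i j) else A t k)" for t k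
  have psd: "\<forall>t<N. \<forall>k<m. psd_on (S k) (A' t k)"
  proof (intro allI impI)
    fix t k assume "t < N" "k < m"
    then have p: "psd_on (S k) (A t k)" using A(1) by blast
    show "psd_on (S k) (A' t k)"
    proof (cases "k = 0")
      case True
      then show ?thesis using p assms(2) unfolding A'_def psd_on_qf by (simp add: qf_scale mult_nonneg_nonneg)
    next
      case False then show ?thesis using p unfolding A'_def by simp
    qed
  qed
  have pt: "ptensor m (A' t) f g = complex_of_real r * ptensor m (A t) f g" for t f g
  proof -
    have "ptensor m (A' t) f g = A' t 0 (f 0) (g 0) * (\<Prod>k\<in>{..<m} - {0}. A' t k (f k) (g k))"
      unfolding ptensor_def by (rule prod.remove) (use assms in auto)
    also have "(\<Prod>k\<in>{..<m} - {0}. A' t k (f k) (g k)) = (\<Prod>k\<in>{..<m} - {0}. A t k (f k) (g k))"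
      unfolding A'_def by (rule prod.cong) auto
    also have "A' t 0 (f 0) (g 0) * \<dots> = complex_of_real r * (A t 0 (f 0) (g 0) * \<dots>)"
      unfolding A'_def by simp
    also have "A t 0 (f 0) (g 0) * (\<Prod>k\<in>{..<m} - {0}. A t k (f k) (g k)) = ptensor m (A t) f g"
      unfolding ptensor_def by (rule prod.remove[symmetric]) (use assms in auto)
    finally show ?thesis .
  qed
  show ?thesis unfolding sep_op_def
    by (rule exI[of _ N], rule exI[of _ A']) (use psd A(2) in \<open>auto simp: pt sum_distrib_left\<close>)
qed

definition triv_povm :: "'c \<Rightarrow> 'c \<Rightarrow> 'i op" where
  "triv_povm x c = (if c = x then idop else (\<lambda>_ _. 0))"

lemma triv_povm_props:
  assumes "x \<in> C" "finite C" "\<And>k. k < m \<Longrightarrow> finite (S k)"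
  shows "povm_on (gidx m S) C (triv_povm x) \<and> locc_povm m S C (triv_povm x) \<and> sep_povm m S C (triv_povm x)"
proof -
  have l: "locc_povm m S C (triv_povm x)"
    unfolding locc_povm_def
    by (rule exI[of _ "{[]}"], rule exI[of _ "\<lambda>_. idop"], rule exI[of _ "\<lambda>_. x"])
       (use assms in \<open>auto intro: loccp.triv simp: triv_povm_def\<close>)
  then show ?thesis using locc_povm_props[OF l assms(2,3)] by blast
qed

lemma triv_povm_psucc:
  assumes "x \<in> C" "finite C" "trace_on (gidx m S) (\<rho> x) = 1" "\<And>k. k < m \<Longrightarrow> finite (S k)"
  shows "psucc (gidx m S) C \<eta> \<rho> (triv_povm x) = \<eta> x"
proof -
  have "psucc (gidx m S) C \<eta> \<rho> (triv_povm x) = (\<Sum>c\<in>C. if c = x then \<eta> x else 0)"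
    unfolding psucc_def
  proof (rule sum.cong[OF refl])
    fix c assume "c \<in> C"
    show "\<eta> c * Re (trace_on (gidx m S) (mmult (gidx m S) (\<rho> c) (triv_povm x c))) = (if c = x then \<eta> x else 0)"
    proof (cases "c = x")
      case True
      then show ?thesis using assms(3) trace_mmult_idop[OF gidx_finite[OF assms(4)]] by (simp add: triv_povm_def)
    next
      case False
      then show ?thesis by (simp add: triv_povm_def trace_on_def mmult_def)
    qed
  qed
  also have "\<dots> = \<eta> x" using assms by simp
  finally show ?thesis .
qed

lemma sep_bound:
  assumes "\<And>k. k < m \<Longrightarrow> finite (S k)" "0 < m" "x \<in> C"
    "\<forall>c\<in>C. 0 \<le> \<eta> c" "trace_on (gidx m S) (\<rho> x) = 1"
    "\<forall>c\<in>C. sep_dual m S (\<lambda>f g. complex_of_real (\<eta> x) * \<rho> x f g - complex_of_real (\<eta> c) * \<rho> c f g)"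
    "povm_on (gidx m S) C M" "sep_povm m S C M"
  shows "psucc (gidx m S) C \<eta> \<rho> M \<le> \<eta> x"
proof -
  let ?G = "gidx m S"
  let ?T = "\<lambda>c c'. Re (trace_on ?G (mmult ?G (\<rho> c) (M c')))"
  have finG: "finite ?G" by (rule gidx_finite) (use assms in auto)
  have finC: "finite C" using assms(7) unfolding povm_on_def by blast
  have key: "\<eta> c * ?T c c \<le> \<eta> x * ?T x c" if c: "c \<in> C" for c
  proof -
    define E where "E f g = complex_of_real (\<eta> x) * \<rho> x f g - complex_of_real (\<eta> c) * \<rho> c f g" for f g
    have psdM: "psd_on ?G (M c)" and sepM: "sep_op m S (M c)" using assms(7,8) c unfolding povm_on_def sep_povm_def by auto
    have trE: "trace_on ?G (mmult ?G E (M c)) = complex_of_real (\<eta> x) * trace_on ?G (mmult ?G (\<rho> x) (M c))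
        - complex_of_real (\<eta> c) * trace_on ?G (mmult ?G (\<rho> c) (M c))"
      unfolding E_def by (simp add: trace_mmult_diff_left trace_mmult_scale_left)
    have "0 \<le> Re (trace_on ?G (mmult ?G E (M c)))"
    proof -
      define t where "t = Re (trace_on ?G (M c))"
      have tI: "trace_on ?G (M c) = complex_of_real t" unfolding t_def trace_on_def
        using psd_diag[OF finG psdM] by (simp add: complex_eq_iff Im_sum)
      have t0: "0 \<le> t" unfolding t_def trace_on_def Re_sum using psd_diag[OF finG psdM] by (auto intro: sum_nonneg)
      show ?thesis
      proof (cases "t = 0")
        case True
        then have "\<forall>i\<in>?G. \<forall>j\<in>?G. M c i j = 0" using psd_trace_zero[OF finG psdM] t_def by auto
        then have "trace_on ?G (mmult ?G E (M c)) = 0" unfolding trace_on_def mmult_def by simp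
        then show ?thesis by simp
      next
        case False
        then have tp: "t > 0" using t0 by simp
        define \<sigma> where "\<sigma> f g = complex_of_real (1 / t) * M c f g" for f g
        have "sep_state m S \<sigma>" unfolding sep_state_def
        proof
          show "sep_op m S \<sigma>" unfolding \<sigma>_def by (rule sep_scale[OF sepM _ assms(2)]) (use tp in simp)
          have "trace_on ?G \<sigma> = complex_of_real (1 / t) * trace_on ?G (M c)"
            unfolding \<sigma>_def trace_on_def by (simp add: sum_distrib_left)
          then show "trace_on ?G \<sigma> = 1" using tI tp by simp
        qed
        then have "0 \<le> Re (trace_on ?G (mmult ?G E \<sigma>))" using assms(6) c unfolding sep_dual_def E_def by blast
        also have "trace_on ?G (mmult ?G E \<sigma>) = complex_of_real (1 / t) * trace_on ?G (mmult ?G E (M c))"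
          unfolding \<sigma>_def by (rule trace_mmult_scale_right)
        finally show ?thesis using tp by (simp add: zero_le_divide_iff)
      qed
    qed
    then show ?thesis unfolding trE by simp
  qed
  have "psucc ?G C \<eta> \<rho> M \<le> (\<Sum>c\<in>C. \<eta> x * ?T x c)"
    unfolding psucc_def by (rule sum_mono) (rule key)
  also have "\<dots> = \<eta> x * Re (\<Sum>c\<in>C. trace_on ?G (mmult ?G (\<rho> x) (M c)))"
    by (simp add: sum_distrib_left Re_sum)
  also have "(\<Sum>c\<in>C. trace_on ?G (mmult ?G (\<rho> x) (M c))) = trace_on ?G (mmult ?G (\<rho> x) (\<lambda>i j. \<Sum>c\<in>C. M c i j))"
    by (simp add: trace_mmult_sum_right)
  also have "\<dots> = trace_on ?G (mmult ?G (\<rho> x) idop)"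
    by (rule trace_mmult_cong) (use assms(7) in \<open>auto simp: povm_on_def\<close>)
  also have "\<dots> = 1" using trace_mmult_idop[OF finG] assms(5) by simp
  finally show ?thesis by simp
qed

definition pvec :: "nat \<Rightarrow> (nat \<Rightarrow> 'a \<Rightarrow> complex) \<Rightarrow> (nat \<Rightarrow> 'a) \<Rightarrow> complex" where
  "pvec m \<psi> f = (\<Prod>k<m. \<psi> k (f k))"

lemma psd_rank1: "psd_on I (\<lambda>i j. u i * cnj (u j))"
  by (rule psd_rank1_sum[where T="{()}" and v="\<lambda>_. u"]) auto

lemma ptensor_rank1: "ptensor m (\<lambda>k i j. \<psi> k i * cnj (\<psi> k j)) f g = pvec m \<psi> f * cnj (pvec m \<psi> g)"
  unfolding ptensor_def pvec_def by (simp add: prod.distrib cnj_prod)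

lemma sep_dual_of_pvec:
  assumes fin: "\<And>k. k < m \<Longrightarrow> finite (S k)" and herm: "hermitian_on (gidx m S) E"
    and pv: "\<forall>\<psi>. 0 \<le> Re (qf (gidx m S) E (pvec m \<psi>))"
  shows "sep_dual m S E"
  unfolding sep_dual_def
proof (intro conjI allI impI herm)
  let ?G = "gidx m S"
  fix \<sigma> assume "sep_state m S \<sigma>"
  then obtain N :: nat and A where A: "\<forall>t<N. \<forall>k<m. psd_on (S k) (A t k)"
    "\<forall>f\<in>?G. \<forall>g\<in>?G. \<sigma> f g = (\<Sum>t<N. ptensor m (A t) f g)"
    unfolding sep_state_def sep_op_def by blast
  have "\<forall>tk. \<exists>nv :: nat \<times> _. (fst tk < N \<and> snd tk < m) \<longrightarrow>
      (\<forall>i\<in>S (snd tk). \<forall>j\<in>S (snd tk). A (fst tk) (snd tk) i j = (\<Sum>s<fst nv. snd nv s i * cnj (snd nv s j)))"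
  proof
    fix tk :: "nat \<times> nat"
    show "\<exists>nv :: nat \<times> _. (fst tk < N \<and> snd tk < m) \<longrightarrow>
      (\<forall>i\<in>S (snd tk). \<forall>j\<in>S (snd tk). A (fst tk) (snd tk) i j = (\<Sum>s<fst nv. snd nv s i * cnj (snd nv s j)))"
    proof (cases "fst tk < N \<and> snd tk < m")
      case True
      then obtain n :: nat and v where "\<forall>i\<in>S (snd tk). \<forall>j\<in>S (snd tk). A (fst tk) (snd tk) i j = (\<Sum>s<n. v s i * cnj (v s j))"
        using psd_decomp[OF fin, of "snd tk" "A (fst tk) (snd tk)"] A(1) by blast
      then show ?thesis by (intro exI[of _ "(n, v)"]) auto
    qed auto
  qed
  from choice[OF this] obtain F :: "nat \<times> nat \<Rightarrow> nat \<times> _" where F0: "\<forall>tk. (fst tk < N \<and> snd tk < m) \<longrightarrow>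
      (\<forall>i\<in>S (snd tk). \<forall>j\<in>S (snd tk). A (fst tk) (snd tk) i j = (\<Sum>s<fst (F tk). snd (F tk) s i * cnj (snd (F tk) s j)))"
    by blast
  have F: "\<And>t k. t < N \<Longrightarrow> k < m \<Longrightarrow>
      (\<forall>i\<in>S k. \<forall>j\<in>S k. A t k i j = (\<Sum>s<fst (F (t, k)). snd (F (t, k)) s i * cnj (snd (F (t, k)) s j)))"
    using F0 by fastforce
  define n where "n t k = fst (F (t, k))" for t k
  define v where "v t k = snd (F (t, k))" for t k
  let ?P = "\<lambda>t. PiE {..<m} (\<lambda>k. {..<n t k})"
  let ?\<Psi> = "\<lambda>t \<tau>. pvec m (\<lambda>k. v t k (\<tau> k))"
  have dec: "\<sigma> f g = (\<Sum>t<N. \<Sum>\<tau>\<in>?P t. ?\<Psi> t \<tau> f * cnj (?\<Psi> t \<tau> g))" if fg: "f \<in> ?G" "g \<in> ?G" for f g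
  proof -
    have "\<sigma> f g = (\<Sum>t<N. ptensor m (A t) f g)" using A(2) fg by blast
    also have "\<dots> = (\<Sum>t<N. \<Prod>k<m. \<Sum>s<n t k. v t k s (f k) * cnj (v t k s (g k)))"
    proof (rule sum.cong[OF refl])
      fix t assume tN: "t \<in> {..<N}"
      show "ptensor m (A t) f g = (\<Prod>k<m. \<Sum>s<n t k. v t k s (f k) * cnj (v t k s (g k)))"
        unfolding ptensor_def n_def v_def
        by (intro prod.cong refl) (use F tN gidx_mem[OF fg(1)] gidx_mem[OF fg(2)] in auto)
    qed
    also have "\<dots> = (\<Sum>t<N. \<Sum>\<tau>\<in>?P t. \<Prod>k<m. v t k (\<tau> k) (f k) * cnj (v t k (\<tau> k) (g k)))"
      by (intro sum.cong refl prod_sum_PiE) auto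
    also have "\<dots> = (\<Sum>t<N. \<Sum>\<tau>\<in>?P t. ?\<Psi> t \<tau> f * cnj (?\<Psi> t \<tau> g))"
      unfolding pvec_def by (simp add: prod.distrib cnj_prod)
    finally show ?thesis .
  qed
  have "trace_on ?G (mmult ?G E \<sigma>) = trace_on ?G (mmult ?G E (\<lambda>f g. \<Sum>t<N. \<Sum>\<tau>\<in>?P t. ?\<Psi> t \<tau> f * cnj (?\<Psi> t \<tau> g)))"
    by (rule trace_mmult_cong) (use dec in auto)
  also have "\<dots> = (\<Sum>t<N. \<Sum>\<tau>\<in>?P t. qf ?G E (?\<Psi> t \<tau>))"
    by (simp add: trace_mmult_sum_right trace_rank1)
  finally have eq: "trace_on ?G (mmult ?G E \<sigma>) = (\<Sum>t<N. \<Sum>\<tau>\<in>?P t. qf ?G E (?\<Psi> t \<tau>))" .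
  show "0 \<le> Re (trace_on ?G (mmult ?G E \<sigma>))"
    unfolding eq Re_sum by (intro sum_nonneg) (use pv in auto)
qed

lemma pvec_of_sep_dual:
  assumes fin: "\<And>k. k < m \<Longrightarrow> finite (S k)" and m: "0 < m" and sd: "sep_dual m S E"
  shows "0 \<le> Re (qf (gidx m S) E (pvec m \<psi>))"
proof -
  let ?G = "gidx m S"
  have finG: "finite ?G" by (rule gidx_finite) (use fin in auto)
  define \<sigma>0 where "\<sigma>0 = ptensor m (\<lambda>k i j. \<psi> k i * cnj (\<psi> k j))"
  have s0: "\<sigma>0 f g = pvec m \<psi> f * cnj (pvec m \<psi> g)" for f g unfolding \<sigma>0_def ptensor_rank1 ..
  have sep0: "sep_op m S \<sigma>0" unfolding \<sigma>0_def by (rule sep_ptensor) (auto intro: psd_rank1)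
  have psd0: "psd_on ?G \<sigma>0" unfolding s0 by (rule psd_rank1)
  have trq: "trace_on ?G (mmult ?G E \<sigma>0) = qf ?G E (pvec m \<psi>)"
    unfolding s0 by (rule trace_rank1)
  define t where "t = Re (trace_on ?G \<sigma>0)"
  have tI: "trace_on ?G \<sigma>0 = complex_of_real t" unfolding t_def trace_on_def
    using psd_diag[OF finG psd0] by (simp add: complex_eq_iff Im_sum)
  have t0: "0 \<le> t" unfolding t_def trace_on_def Re_sum using psd_diag[OF finG psd0] by (auto intro: sum_nonneg)
  show ?thesis
  proof (cases "t = 0")
    case True
    then have "\<forall>i\<in>?G. \<forall>j\<in>?G. \<sigma>0 i j = 0" using psd_trace_zero[OF finG psd0] t_def by auto
    then have "trace_on ?G (mmult ?G E \<sigma>0) = 0" unfolding trace_on_def mmult_def by simp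
    then show ?thesis using trq by simp
  next
    case False
    then have tp: "t > 0" using t0 by simp
    define \<sigma> where "\<sigma> f g = complex_of_real (1 / t) * \<sigma>0 f g" for f g
    have "sep_state m S \<sigma>" unfolding sep_state_def
    proof
      show "sep_op m S \<sigma>" unfolding \<sigma>_def by (rule sep_scale[OF sep0 _ m]) (use tp in simp)
      have "trace_on ?G \<sigma> = complex_of_real (1 / t) * trace_on ?G \<sigma>0"
        unfolding \<sigma>_def trace_on_def by (simp add: sum_distrib_left)
      then show "trace_on ?G \<sigma> = 1" using tI tp by simp
    qed
    then have "0 \<le> Re (trace_on ?G (mmult ?G E \<sigma>))" using sd unfolding sep_dual_def by blast
    also have "trace_on ?G (mmult ?G E \<sigma>) = complex_of_real (1 / t) * trace_on ?G (mmult ?G E \<sigma>0)"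
      unfolding \<sigma>_def by (rule trace_mmult_scale_right)
    finally show ?thesis using tp trq by (simp add: zero_le_divide_iff)
  qed
qed

lemma herm_E:
  assumes "finite G" "psd_on G A" "psd_on G B"
  shows "hermitian_on G (\<lambda>f g. complex_of_real a * A f g - complex_of_real b * B f g)"
  unfolding hermitian_on_def
proof (intro ballI)
  fix i j assume ij: "i \<in> G" "j \<in> G"
  have "A i j = cnj (A j i)" "B i j = cnj (B j i)"
    using psd_hermitian[OF assms(1,2) ij(2,1)] psd_hermitian[OF assms(1,3) ij(2,1)] by auto
  then show "complex_of_real a * A i j - complex_of_real b * B i j = cnj (complex_of_real a * A j i - complex_of_real b * B j i)"
    by simp
qed



definition projR :: "(nat \<Rightarrow> 'a \<Rightarrow> complex) \<Rightarrow> nat \<Rightarrow> nat \<Rightarrow> 'a op" where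
  "projR \<phi> k a = (if a = 0 then (\<lambda>i j. \<phi> k i * cnj (\<phi> k j)) else (\<lambda>i j. idop i j - \<phi> k i * cnj (\<phi> k j)))"

lemma projR_sq:
  assumes "finite T" "(\<Sum>i\<in>T. cnj (\<phi> k i) * \<phi> k i) = 1" "i \<in> T" "j \<in> T"
  shows "(\<Sum>i'\<in>T. cnj (projR \<phi> k a i' i) * projR \<phi> k a i' j) = projR \<phi> k a i j"
proof (cases "a = 0")
  case True
  have "(\<Sum>i'\<in>T. cnj (\<phi> k i' * cnj (\<phi> k i)) * (\<phi> k i' * cnj (\<phi> k j))) =
      \<phi> k i * cnj (\<phi> k j) * (\<Sum>i'\<in>T. cnj (\<phi> k i') * \<phi> k i')"
    by (simp add: sum_distrib_left mult_ac)
  then show ?thesis using True assms(2) by (simp add: projR_def)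
next
  case False
  let ?P = "\<lambda>i j. \<phi> k i * cnj (\<phi> k j)"
  have "(\<Sum>i'\<in>T. cnj (idop i' i - ?P i' i) * (idop i' j - ?P i' j)) =
     (\<Sum>i'\<in>T. idop i' i * idop i' j) - (\<Sum>i'\<in>T. idop i' i * ?P i' j) - (\<Sum>i'\<in>T. cnj (?P i' i) * idop i' j)
       + (\<Sum>i'\<in>T. cnj (?P i' i) * ?P i' j)"
    by (simp add: algebra_simps sum_subtractf sum.distrib idop_mult(3))
  also have "(\<Sum>i'\<in>T. idop i' i * idop i' j) = idop i j" using assms by (simp add: idop_mult(1))
  also have "(\<Sum>i'\<in>T. idop i' i * ?P i' j) = ?P i j" using assms by (simp add: idop_mult)
  also have "(\<Sum>i'\<in>T. cnj (?P i' i) * idop i' j) = ?P i j" using assms by (simp add: idop_mult)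
  also have "(\<Sum>i'\<in>T. cnj (?P i' i) * ?P i' j) = ?P i j * (\<Sum>i'\<in>T. cnj (\<phi> k i') * \<phi> k i')"
    by (simp add: sum_distrib_left mult_ac)
  finally show ?thesis using False assms(2) by (simp add: projR_def)
qed

lemma projR_kraus:
  assumes "finite T" "(\<Sum>i\<in>T. cnj (\<phi> k i) * \<phi> k i) = 1"
  shows "kraus_complete T T {0, 1} (projR \<phi> k)"
  unfolding kraus_complete_def
proof (intro ballI)
  fix j j' assume jj: "j \<in> T" "j' \<in> T"
  have "(\<Sum>a\<in>{0::nat, 1}. \<Sum>i\<in>T. cnj (projR \<phi> k a i j) * projR \<phi> k a i j') = projR \<phi> k 0 j j' + projR \<phi> k 1 j j'"
    using projR_sq[where \<phi>=\<phi> and k=k, OF assms jj] by simp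
  also have "\<dots> = idop j j'" by (simp add: projR_def)
  finally show "(\<Sum>a\<in>{0::nat, 1}. \<Sum>i\<in>T. cnj (projR \<phi> k a i j) * projR \<phi> k a i j') = idop j j'" .
qed

lemma projR_sandwich:
  assumes "finite T" "(\<Sum>i\<in>T. cnj (\<phi> k i) * \<phi> k i) = 1" "i \<in> T" "j \<in> T"
  shows "sandwich T (projR \<phi> k a) idop i j = projR \<phi> k a i j"
  using sandwich_idop_mid[OF assms(1)] projR_sq[where \<phi>=\<phi> and k=k, OF assms] by simp

definition Wl :: "nat \<Rightarrow> nat list set" where "Wl r = {w. length w = r \<and> set w \<subseteq> {0, 1}}"

lemma Wl_Suc: "Wl (Suc r) = (\<Union>a\<in>{0, 1}. Cons a ` Wl r)"
  unfolding Wl_def by (auto simp: length_Suc_conv)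

lemma Wl_0: "Wl 0 = {[]}" unfolding Wl_def by auto

lemma proto:
  assumes fin: "\<And>k. k < m \<Longrightarrow> finite (S k)"
    and nrm: "\<And>k. k < m \<Longrightarrow> (\<Sum>i\<in>S k. cnj (\<phi> k i) * \<phi> k i) = 1"
  shows "j + r = m \<Longrightarrow> \<exists>P. loccp m S (Wl r) P \<and> (\<forall>w\<in>Wl r. \<forall>f\<in>gidx m S. \<forall>g\<in>gidx m S.
     P w f g = ptensor m (\<lambda>k. if j \<le> k then projR \<phi> k (w ! (k - j)) else idop) f g)"
proof (induction r arbitrary: j)
  case 0
  have "\<forall>f\<in>gidx m S. \<forall>g\<in>gidx m S. idop f g = ptensor m (\<lambda>k. if j \<le> k then projR \<phi> k ([] ! (k - j)) else idop) f g"
  proof (intro ballI)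
    fix f g assume fg: "f \<in> gidx m S" "g \<in> gidx m S"
    have "idop f g = ptensor m (\<lambda>_. idop) f g" by (rule idop_ptensor[OF fg])
    also have "\<dots> = ptensor m (\<lambda>k. if j \<le> k then projR \<phi> k ([] ! (k - j)) else idop) f g"
      unfolding ptensor_def using 0 by (intro prod.cong refl) auto
    finally show "idop f g = ptensor m (\<lambda>k. if j \<le> k then projR \<phi> k ([] ! (k - j)) else idop) f g" .
  qed
  then show ?case unfolding Wl_0 by (intro exI[of _ "\<lambda>_. idop"]) (auto intro: loccp.triv)
next
  case (Suc r)
  then have jm: "j < m" by simp
  obtain P where P: "loccp m S (Wl r) P" "\<forall>w\<in>Wl r. \<forall>f\<in>gidx m S. \<forall>g\<in>gidx m S.
     P w f g = ptensor m (\<lambda>k. if Suc j \<le> k then projR \<phi> k (w ! (k - Suc j)) else idop) f g"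
    using Suc.IH[of "Suc j"] Suc.prems by auto
  have Sj: "S(j := S j) = S" by simp
  have L: "loccp m S (\<Union>a\<in>{0, 1}. Cons a ` Wl r)
      (\<lambda>w. sandwich (gidx m (S(j := S j))) (loc_lift m j (projR \<phi> j (hd w))) ((\<lambda>_. P) (hd w) (tl w)))"
    by (rule loccp.step[where S=S and k=j and S'="S j" and A="{0,1}" and K="projR \<phi> j" and Os="\<lambda>_. Wl r" and Ps="\<lambda>_. P"])
       (use P(1) jm fin[OF jm] projR_kraus[where \<phi>=\<phi> and k=j, OF fin[OF jm] nrm[OF jm]] in \<open>auto simp: Sj\<close>)
  let ?Q = "\<lambda>w. sandwich (gidx m S) (loc_lift m j (projR \<phi> j (hd w))) (P (tl w))"
  have vals: "?Q w f g = ptensor m (\<lambda>k. if j \<le> k then projR \<phi> k (w ! (k - j)) else idop) f g"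
    if w: "w \<in> Wl (Suc r)" and fg: "f \<in> gidx m S" "g \<in> gidx m S" for w f g
  proof -
    obtain a w' where aw: "w = a # w'" "a \<in> {0, 1}" "w' \<in> Wl r" using w unfolding Wl_Suc by auto
    let ?K = "\<lambda>k. if k = j then projR \<phi> j a else idop"
    let ?B = "\<lambda>k. if Suc j \<le> k then projR \<phi> k (w' ! (k - Suc j)) else idop"
    have "?Q w f g = sandwich (gidx m S) (ptensor m ?K) (P w') f g"
      unfolding aw(1) loc_lift_ptensor[OF jm] by (simp cong: if_cong)
    also have "\<dots> = sandwich (gidx m S) (ptensor m ?K) (ptensor m ?B) f g"
      by (rule sandwich_cong) (use P(2) aw in auto)
    also have "\<dots> = ptensor m (\<lambda>k. sandwich (S k) (?K k) (?B k)) f g" by (rule T_sand) (rule fin)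
    also have "\<dots> = ptensor m (\<lambda>k. if j \<le> k then projR \<phi> k (w ! (k - j)) else idop) f g"
    proof (rule ptensor_cong[OF _ fg])
      fix k i i' assume k: "k < m" "i \<in> S k" "i' \<in> S k"
      show "sandwich (S k) (?K k) (?B k) i i' = (if j \<le> k then projR \<phi> k (w ! (k - j)) else idop) i i'"
      proof (cases "k = j")
        case True
        then show ?thesis using projR_sandwich[where \<phi>=\<phi> and k=k, OF fin[OF k(1)] nrm[OF k(1)] k(2,3)] aw(1) by simp
      next
        case False
        then have "sandwich (S k) (?K k) (?B k) i i' = ?B k i i'" using sandwich_idop_left[OF fin[OF k(1)] k(2,3)] by simp
        also have "\<dots> = (if j \<le> k then projR \<phi> k (w ! (k - j)) else idop) i i'"
        proof (cases "j < k")
          case True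
          then have "w ! (k - j) = w' ! (k - Suc j)" unfolding aw(1)
            by (metis Suc_diff_Suc nth_Cons_Suc)
          then show ?thesis using True by simp
        next
          case False then show ?thesis using \<open>k \<noteq> j\<close> by simp
        qed
        finally show ?thesis .
      qed
    qed
    finally show ?thesis .
  qed
  show ?case
  proof (rule exI[of _ ?Q], intro conjI)
    show "loccp m S (Wl (Suc r)) ?Q" using L unfolding Wl_Suc Sj .
  qed (use vals in blast)
qed

lemma qf_smult: "qf I A (\<lambda>i. complex_of_real r * v i) = complex_of_real (r * r) * qf I A v"
  unfolding qf_def by (simp add: sum_distrib_left mult_ac)

lemma sum_cnj_self: "(\<Sum>i\<in>T. cnj (v i) * v i) = complex_of_real (\<Sum>i\<in>T. (Re (v i))^2 + (Im (v i))^2)"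
  by (simp add: complex_eq_iff Re_sum Im_sum power2_eq_square)

lemma locc_beats:
  assumes fin: "\<And>k. k < m \<Longrightarrow> finite (S k)" and m: "0 < m"
    and C: "finite C" "x \<in> C" "c \<in> C" "c \<noteq> x"
    and \<rho>x: "trace_on (gidx m S) (\<rho> x) = 1"
    and neg: "Re (qf (gidx m S) (\<lambda>f g. complex_of_real (\<eta> x) * \<rho> x f g - complex_of_real (\<eta> c) * \<rho> c f g) (pvec m \<psi>)) < 0"
  shows "\<exists>M. povm_on (gidx m S) C M \<and> locc_povm m S C M \<and> \<eta> x < psucc (gidx m S) C \<eta> \<rho> M"
proof -
  let ?G = "gidx m S"
  define E where "E f g = complex_of_real (\<eta> x) * \<rho> x f g - complex_of_real (\<eta> c) * \<rho> c f g" for f g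
  have finG: "finite ?G" by (rule gidx_finite) (use fin in auto)
  define nk where "nk k = (\<Sum>i\<in>S k. (Re (\<psi> k i))^2 + (Im (\<psi> k i))^2)" for k
  have nkp: "nk k > 0" if k: "k < m" for k
  proof (rule ccontr)
    assume "\<not> nk k > 0"
    moreover have "nk k \<ge> 0" unfolding nk_def by (auto intro: sum_nonneg)
    ultimately have "nk k = 0" by simp
    then have "\<forall>i\<in>S k. (Re (\<psi> k i))^2 + (Im (\<psi> k i))^2 = 0"
      unfolding nk_def using fin[OF k] by (subst (asm) sum_nonneg_eq_0_iff) auto
    then have z: "\<forall>i\<in>S k. \<psi> k i = 0" by (auto simp: complex_eq_iff add_nonneg_eq_0_iff)
    have "\<forall>f\<in>?G. pvec m \<psi> f = 0"
    proof
      fix f assume "f \<in> ?G"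
      then have "\<psi> k (f k) = 0" using z gidx_mem k by blast
      then show "pvec m \<psi> f = 0" unfolding pvec_def using k by (auto intro: prod_zero)
    qed
    then have "qf ?G E (pvec m \<psi>) = 0" unfolding qf_def by simp
    then show False using neg unfolding E_def by simp
  qed
  define \<phi> where "\<phi> k i = complex_of_real (1 / sqrt (nk k)) * \<psi> k i" for k i
  have nrm: "(\<Sum>i\<in>S k. cnj (\<phi> k i) * \<phi> k i) = 1" if k: "k < m" for k
  proof -
    have "(\<Sum>i\<in>S k. cnj (\<phi> k i) * \<phi> k i) = complex_of_real (1 / nk k) * (\<Sum>i\<in>S k. cnj (\<psi> k i) * \<psi> k i)"
    proof -
      have sq: "(complex_of_real (sqrt (nk k)))^2 = complex_of_real (nk k)"
        using nkp[OF k] by (simp flip: of_real_power)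
      show ?thesis unfolding \<phi>_def using nkp[OF k] by (simp add: sum_distrib_left mult_ac power2_eq_square[symmetric] sq)
    qed
    also have "\<dots> = 1" unfolding sum_cnj_self nk_def[symmetric] using nkp[OF k] by simp
    finally show ?thesis .
  qed
  define c0 where "c0 = (\<Prod>k<m. 1 / sqrt (nk k))"
  have c0p: "c0 > 0" unfolding c0_def using nkp by (auto intro: prod_pos)
  have pv: "pvec m \<phi> = (\<lambda>f. complex_of_real c0 * pvec m \<psi> f)"
  proof
    fix f
    have "(\<Prod>k<m. complex_of_real (1 / sqrt (nk k)) * \<psi> k (f k)) = (\<Prod>k<m. complex_of_real (1 / sqrt (nk k))) * (\<Prod>k<m. \<psi> k (f k))"
      by (rule prod.distrib)
    then show "pvec m \<phi> f = complex_of_real c0 * pvec m \<psi> f"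
      unfolding pvec_def \<phi>_def c0_def by (simp only: of_real_prod)
  qed
  have negE: "Re (qf ?G E (pvec m \<phi>)) < 0"
    unfolding pv qf_smult using neg c0p unfolding E_def by (simp add: mult_pos_neg)
  obtain P where P: "loccp m S (Wl m) P" "\<forall>w\<in>Wl m. \<forall>f\<in>?G. \<forall>g\<in>?G.
     P w f g = ptensor m (\<lambda>k. if 0 \<le> k then projR \<phi> k (w ! (k - 0)) else idop) f g"
    using proto[where m=m and S=S and \<phi>=\<phi> and j=0 and r=m, OF fin nrm] by auto
  have LP: "finite (Wl m)" "\<forall>f\<in>?G. \<forall>g\<in>?G. (\<Sum>w\<in>Wl m. P w f g) = idop f g"
    using loccp_props[OF P(1) fin] by blast+
  define z where "z = replicate m (0::nat)"
  have zW: "z \<in> Wl m" unfolding z_def Wl_def by auto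
  define gg where "gg w = (if w = z then c else x)" for w
  define M where "M c' f h = (\<Sum>w\<in>{w\<in>Wl m. gg w = c'}. P w f h)" for c' f h
  have loc: "locc_povm m S C M" unfolding locc_povm_def M_def
    by (rule exI[of _ "Wl m"], rule exI[of _ P], rule exI[of _ gg]) (use P(1) C in \<open>auto simp: gg_def\<close>)
  have pov: "povm_on ?G C M" using locc_povm_props[OF loc C(1) fin] by blast
  define \<Phi> where "\<Phi> = pvec m \<phi>"
  have Mc: "M c f h = \<Phi> f * cnj (\<Phi> h)" if fh: "f \<in> ?G" "h \<in> ?G" for f h
  proof -
    have "{w\<in>Wl m. gg w = c} = {z}" using zW C(4) unfolding gg_def by auto
    then have "M c f h = P z f h" unfolding M_def by simp
    also have "\<dots> = ptensor m (\<lambda>k. projR \<phi> k 0) f h"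
      using P(2) zW fh by (simp add: z_def cong: ptensor_cong)
    also have "\<dots> = \<Phi> f * cnj (\<Phi> h)" unfolding \<Phi>_def projR_def by (simp add: ptensor_rank1)
    finally show ?thesis .
  qed
  have Mx: "M x f h = idop f h - \<Phi> f * cnj (\<Phi> h)" if fh: "f \<in> ?G" "h \<in> ?G" for f h
  proof -
    have "{w\<in>Wl m. gg w = x} = Wl m - {z}" using C(4) unfolding gg_def by auto
    then have "M x f h = (\<Sum>w\<in>Wl m - {z}. P w f h)" unfolding M_def by simp
    also have "\<dots> = (\<Sum>w\<in>Wl m. P w f h) - P z f h" using LP(1) zW by (simp add: sum_diff1)
    also have "P z f h = M c f h"
    proof -
      have "{w\<in>Wl m. gg w = c} = {z}" using zW C(4) unfolding gg_def by auto
      then show ?thesis unfolding M_def by simp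
    qed
    finally show ?thesis using LP(2) fh Mc by simp
  qed
  have M0: "M c' = (\<lambda>_ _. 0)" if "c' \<noteq> x" "c' \<noteq> c" for c'
  proof -
    have e: "{w\<in>Wl m. gg w = c'} = {}" using that unfolding gg_def by auto
    show ?thesis unfolding M_def e by simp
  qed
  let ?T = "\<lambda>c'. \<eta> c' * Re (trace_on ?G (mmult ?G (\<rho> c') (M c')))"
  have "psucc ?G C \<eta> \<rho> M = (\<Sum>c'\<in>{x, c}. ?T c')"
    unfolding psucc_def
    by (rule sum.mono_neutral_right) (use C in \<open>auto simp: M0 trace_on_def mmult_def\<close>)
  also have "\<dots> = ?T x + ?T c" using C(4) by simp
  also have "trace_on ?G (mmult ?G (\<rho> c) (M c)) = qf ?G (\<rho> c) \<Phi>"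
  proof -
    have "trace_on ?G (mmult ?G (\<rho> c) (M c)) = trace_on ?G (mmult ?G (\<rho> c) (\<lambda>f h. \<Phi> f * cnj (\<Phi> h)))"
      by (rule trace_mmult_cong) (use Mc in auto)
    then show ?thesis by (simp add: trace_rank1)
  qed
  also have "trace_on ?G (mmult ?G (\<rho> x) (M x)) = 1 - qf ?G (\<rho> x) \<Phi>"
  proof -
    have "trace_on ?G (mmult ?G (\<rho> x) (M x)) = trace_on ?G (mmult ?G (\<rho> x) (\<lambda>f h. idop f h - \<Phi> f * cnj (\<Phi> h)))"
      by (rule trace_mmult_cong) (use Mx in auto)
    also have "\<dots> = trace_on ?G (mmult ?G (\<rho> x) idop) - qf ?G (\<rho> x) \<Phi>"
      by (simp add: trace_mmult_diff_right trace_rank1)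
    finally show ?thesis using \<rho>x trace_mmult_idop[OF finG] by simp
  qed
  finally have ps: "psucc ?G C \<eta> \<rho> M = \<eta> x - Re (qf ?G E \<Phi>)"
    unfolding E_def qf_diff qf_scale by (simp add: algebra_simps)
  show ?thesis using pov loc ps negE unfolding \<Phi>_def by (intro exI[of _ M]) auto
qed



theorem general_thm:
  fixes m :: nat and S :: "nat \<Rightarrow> 'a set" and C :: "'c set" and \<eta> :: "'c \<Rightarrow> real" and \<rho> :: "'c \<Rightarrow> (nat \<Rightarrow> 'a) op"
  assumes fin: "\<And>k. k < m \<Longrightarrow> finite (S k)" and m: "0 < m" and C: "finite C" "x \<in> C"
    and \<eta>: "\<forall>c\<in>C. 0 \<le> \<eta> c"
    and \<rho>: "\<forall>c\<in>C. psd_on (gidx m S) (\<rho> c) \<and> trace_on (gidx m S) (\<rho> c) = 1"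
  shows "(p_L m S C \<eta> \<rho> = \<eta> x \<longleftrightarrow> (\<forall>c\<in>C. sep_dual m S (\<lambda>f g. complex_of_real (\<eta> x) * \<rho> x f g - complex_of_real (\<eta> c) * \<rho> c f g)))
    \<and> ((\<forall>c\<in>C. sep_dual m S (\<lambda>f g. complex_of_real (\<eta> x) * \<rho> x f g - complex_of_real (\<eta> c) * \<rho> c f g))
         \<longrightarrow> p_L m S C \<eta> \<rho> = \<eta> x \<and> p_SEP m S C \<eta> \<rho> = \<eta> x)"
proof -
  let ?G = "gidx m S"
  let ?E = "\<lambda>c f g. complex_of_real (\<eta> x) * \<rho> x f g - complex_of_real (\<eta> c) * \<rho> c f g"
  let ?LS = "{psucc ?G C \<eta> \<rho> M | M. povm_on ?G C M \<and> locc_povm m S C M}"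
  let ?SS = "{psucc ?G C \<eta> \<rho> M | M. povm_on ?G C M \<and> sep_povm m S C M}"
  have finG: "finite ?G" by (rule gidx_finite) (use fin in auto)
  have triv: "povm_on ?G C (triv_povm x) \<and> locc_povm m S C (triv_povm x) \<and> sep_povm m S C (triv_povm x)"
    by (rule triv_povm_props[OF C(2,1) fin])
  have tv: "psucc ?G C \<eta> \<rho> (triv_povm x) = \<eta> x" by (rule triv_povm_psucc[OF C(2,1)]) (use \<rho> C fin in auto)
  have A: "p_L m S C \<eta> \<rho> = \<eta> x \<and> p_SEP m S C \<eta> \<rho> = \<eta> x" if sd: "\<forall>c\<in>C. sep_dual m S (?E c)"
  proof -
    have ub: "\<And>M. povm_on ?G C M \<Longrightarrow> sep_povm m S C M \<Longrightarrow> psucc ?G C \<eta> \<rho> M \<le> \<eta> x"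
      by (rule sep_bound[OF fin m C(2) \<eta>]) (use \<rho> C sd in auto)
    have m1: "\<eta> x \<in> ?SS" by (rule CollectI, rule exI[of _ "triv_povm x"]) (use triv tv in auto)
    have m2: "\<eta> x \<in> ?LS" by (rule CollectI, rule exI[of _ "triv_povm x"]) (use triv tv in auto)
    have "Sup ?SS = \<eta> x"
      by (rule cSup_eq_maximum[OF m1]) (use ub in auto)
    moreover have "Sup ?LS = \<eta> x"
      by (rule cSup_eq_maximum[OF m2]) (use ub locc_povm_props[OF _ C(1) fin] in auto)
    ultimately show ?thesis unfolding p_L_def p_SEP_def by simp
  qed
  have B: "\<forall>c\<in>C. sep_dual m S (?E c)" if pl: "p_L m S C \<eta> \<rho> = \<eta> x"
  proof (rule ccontr)
    assume "\<not> (\<forall>c\<in>C. sep_dual m S (?E c))"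
    then obtain c where c: "c \<in> C" "\<not> sep_dual m S (?E c)" by blast
    have herm: "hermitian_on ?G (?E c)" by (rule herm_E[OF finG]) (use \<rho> c C in auto)
    obtain \<psi> where neg: "\<not> 0 \<le> Re (qf ?G (?E c) (pvec m \<psi>))"
      using sep_dual_of_pvec[OF fin herm] c by blast
    have cx: "c \<noteq> x"
    proof
      assume "c = x"
      then have e: "?E c = (\<lambda>f g. 0)" by simp
      have "qf ?G (\<lambda>f g. 0) (pvec m \<psi>) = 0" unfolding qf_def by simp
      then show False using neg unfolding e by simp
    qed
    obtain M where M: "povm_on ?G C M" "locc_povm m S C M" "\<eta> x < psucc ?G C \<eta> \<rho> M"
      using locc_beats[where S=S and m=m and \<rho>=\<rho> and \<eta>=\<eta> and \<psi>=\<psi>, OF fin m C(1,2) c(1) cx] \<rho> C neg by auto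
    have bdd: "bdd_above ?LS"
      by (rule bdd_aboveI[of _ "\<Sum>c\<in>C. \<eta> c"]) (use psucc_bound[OF _ fin \<eta> \<rho>] in auto)
    have "psucc ?G C \<eta> \<rho> M \<le> Sup ?LS" by (rule cSup_upper) (use M bdd in auto)
    then show False using M(3) pl unfolding p_L_def by simp
  qed
  show ?thesis using A B by blast
qed



definition trinv :: "nat \<Rightarrow> nat \<Rightarrow> (nat \<Rightarrow> nat \<Rightarrow> nat) \<Rightarrow> nat \<Rightarrow> nat \<Rightarrow> nat" where
  "trinv m L X = restrict (\<lambda>k. restrict (\<lambda>l. X l k) {1..L}) {..<m}"

definition trn :: "nat \<Rightarrow> nat \<Rightarrow> (nat \<Rightarrow> nat \<Rightarrow> nat) \<Rightarrow> nat \<Rightarrow> nat \<Rightarrow> nat" where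
  "trn m L F = restrict (\<lambda>l. restrict (\<lambda>k. F k l) {..<m}) {1..L}"

abbreviation G1 :: "nat \<Rightarrow> (nat \<Rightarrow> nat) \<Rightarrow> (nat \<Rightarrow> nat) set" where
  "G1 m d \<equiv> gidx m (\<lambda>k. {..<d k})"

lemma trinv_bij:
  "bij_betw (trinv m L) (PiE {1..L} (\<lambda>_. G1 m d)) (gidx m (seqS L d))"
proof (rule bij_betw_byWitness[where f'="trn m L"])
  show "\<forall>X\<in>PiE {1..L} (\<lambda>_. G1 m d). trn m L (trinv m L X) = X"
  proof
    fix X assume X: "X \<in> PiE {1..L} (\<lambda>_. G1 m d)"
    show "trn m L (trinv m L X) = X"
    proof (rule ext)
      fix l show "trn m L (trinv m L X) l = X l"
      proof (cases "l \<in> {1..L}")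
        case True
        then have "X l \<in> G1 m d" using X by auto
        then show ?thesis using True unfolding trn_def trinv_def gidx_def
          by (auto simp: PiE_def extensional_def fun_eq_iff)
      next
        case False then show ?thesis using X unfolding trn_def by (auto simp: PiE_def extensional_def)
      qed
    qed
  qed
  show "\<forall>F\<in>gidx m (seqS L d). trinv m L (trn m L F) = F"
  proof
    fix F assume F: "F \<in> gidx m (seqS L d)"
    show "trinv m L (trn m L F) = F"
    proof (rule ext)
      fix k show "trinv m L (trn m L F) k = F k"
      proof (cases "k < m")
        case True
        then have "F k \<in> seqS L d k" using F gidx_mem by blast
        then show ?thesis using True unfolding trn_def trinv_def seqS_def
          by (auto simp: PiE_def extensional_def fun_eq_iff)
      next
        case False then show ?thesis using F unfolding trinv_def gidx_def by (auto simp: PiE_def extensional_def)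
      qed
    qed
  qed
  show "trinv m L ` PiE {1..L} (\<lambda>_. G1 m d) \<subseteq> gidx m (seqS L d)"
    unfolding trinv_def gidx_def seqS_def by (auto simp: PiE_iff)
  show "trn m L ` gidx m (seqS L d) \<subseteq> PiE {1..L} (\<lambda>_. G1 m d)"
    unfolding trn_def gidx_def seqS_def by (auto simp: PiE_iff)
qed

lemma sum_seq_reindex:
  "(\<Sum>F\<in>gidx m (seqS L d). h F) = (\<Sum>X\<in>PiE {1..L} (\<lambda>_. G1 m d). h (trinv m L X))"
  using sum.reindex_bij_betw[OF trinv_bij, of h] by simp

lemma trinv_restrict:
  assumes "X \<in> PiE {1..L} (\<lambda>_. G1 m d)" "l \<in> {1..L}"
  shows "restrict (\<lambda>k. trinv m L X k l) {..<m} = X l"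
proof -
  have "X l \<in> G1 m d" using assms by auto
  then show ?thesis using assms(2) unfolding trinv_def gidx_def by (auto simp: PiE_def extensional_def fun_eq_iff)
qed

lemma seq_state_trinv:
  assumes "X \<in> PiE {1..L} (\<lambda>_. G1 m d)" "Y \<in> PiE {1..L} (\<lambda>_. G1 m d)"
  shows "seq_state m L \<rho> c (trinv m L X) (trinv m L Y) = (\<Prod>l\<in>{1..L}. \<rho> l (c l) (X l) (Y l))"
  unfolding seq_state_def using trinv_restrict[OF assms(1)] trinv_restrict[OF assms(2)] by simp

lemma pvec_trinv:
  "pvec m (\<lambda>k F. \<Prod>l\<in>{1..L}. \<phi> l k (F l)) (trinv m L X) = (\<Prod>l\<in>{1..L}. pvec m (\<phi> l) (X l))"
proof -
  have "pvec m (\<lambda>k F. \<Prod>l\<in>{1..L}. \<phi> l k (F l)) (trinv m L X) = (\<Prod>k<m. \<Prod>l\<in>{1..L}. \<phi> l k (X l k))"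
    unfolding pvec_def trinv_def by simp
  also have "\<dots> = (\<Prod>l\<in>{1..L}. pvec m (\<phi> l) (X l))" unfolding pvec_def by (rule prod.swap)
  finally show ?thesis .
qed

lemma finite_G1: "finite (G1 m d)" by (rule gidx_finite) auto

lemma qf_seq:
  "qf (gidx m (seqS L d)) (seq_state m L \<rho> c) (pvec m (\<lambda>k F. \<Prod>l\<in>{1..L}. \<phi> l k (F l)))
   = (\<Prod>l\<in>{1..L}. qf (G1 m d) (\<rho> l (c l)) (pvec m (\<phi> l)))"
proof -
  let ?P = "PiE {1..L} (\<lambda>_. G1 m d)"
  let ?\<Psi> = "pvec m (\<lambda>k F. \<Prod>l\<in>{1..L}. \<phi> l k (F l))"
  let ?h = "\<lambda>l a b. cnj (pvec m (\<phi> l) a) * \<rho> l (c l) a b * pvec m (\<phi> l) b"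
  have "qf (gidx m (seqS L d)) (seq_state m L \<rho> c) ?\<Psi> =
     (\<Sum>X\<in>?P. \<Sum>Y\<in>?P. cnj (?\<Psi> (trinv m L X)) * seq_state m L \<rho> c (trinv m L X) (trinv m L Y) * ?\<Psi> (trinv m L Y))"
    unfolding qf_def sum_seq_reindex ..
  also have "\<dots> = (\<Sum>X\<in>?P. \<Sum>Y\<in>?P. \<Prod>l\<in>{1..L}. ?h l (X l) (Y l))"
    unfolding pvec_trinv by (intro sum.cong refl) (simp add: seq_state_trinv cnj_prod prod.distrib)
  also have "\<dots> = (\<Sum>X\<in>?P. \<Prod>l\<in>{1..L}. \<Sum>b\<in>G1 m d. ?h l (X l) b)"
    by (intro sum.cong refl prod_sum_PiE[symmetric]) (auto simp: finite_G1)
  also have "\<dots> = (\<Prod>l\<in>{1..L}. \<Sum>a\<in>G1 m d. \<Sum>b\<in>G1 m d. ?h l a b)"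
    by (rule prod_sum_PiE[symmetric, where f="\<lambda>l a. \<Sum>b\<in>G1 m d. ?h l a b"]) (auto simp: finite_G1)
  finally show ?thesis unfolding qf_def .
qed

lemma trace_seq:
  assumes "\<forall>l\<in>{1..L}. trace_on (G1 m d) (\<rho> l (c l)) = 1"
  shows "trace_on (gidx m (seqS L d)) (seq_state m L \<rho> c) = 1"
proof -
  let ?P = "PiE {1..L} (\<lambda>_. G1 m d)"
  have "trace_on (gidx m (seqS L d)) (seq_state m L \<rho> c) = (\<Sum>X\<in>?P. \<Prod>l\<in>{1..L}. \<rho> l (c l) (X l) (X l))"
    unfolding trace_on_def sum_seq_reindex by (intro sum.cong refl) (simp add: seq_state_trinv)
  also have "\<dots> = (\<Prod>l\<in>{1..L}. \<Sum>a\<in>G1 m d. \<rho> l (c l) a a)"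
    by (rule prod_sum_PiE[symmetric, where f="\<lambda>l a. \<rho> l (c l) a a"]) (auto simp: finite_G1)
  also have "\<dots> = 1" using assms unfolding trace_on_def by simp
  finally show ?thesis .
qed

lemma restrict_mem_G1:
  assumes "F \<in> gidx m (seqS L d)" "l \<in> {1..L}"
  shows "restrict (\<lambda>k. F k l) {..<m} \<in> G1 m d"
  using assms unfolding gidx_def seqS_def by (auto simp: PiE_iff)

lemma psd_seq:
  assumes "\<forall>l\<in>{1..L}. psd_on (G1 m d) (\<rho> l (c l))"
  shows "psd_on (gidx m (seqS L d)) (seq_state m L \<rho> c)"
proof -
  have "\<forall>l. \<exists>Nv :: nat \<times> _. l \<in> {1..L} \<longrightarrow>
     (\<forall>i\<in>G1 m d. \<forall>j\<in>G1 m d. \<rho> l (c l) i j = (\<Sum>t<fst Nv. snd Nv t i * cnj (snd Nv t j)))"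
  proof
    fix l
    show "\<exists>Nv :: nat \<times> _. l \<in> {1..L} \<longrightarrow>
     (\<forall>i\<in>G1 m d. \<forall>j\<in>G1 m d. \<rho> l (c l) i j = (\<Sum>t<fst Nv. snd Nv t i * cnj (snd Nv t j)))"
    proof (cases "l \<in> {1..L}")
      case True
      then obtain N :: nat and v where "\<forall>i\<in>G1 m d. \<forall>j\<in>G1 m d. \<rho> l (c l) i j = (\<Sum>t<N. v t i * cnj (v t j))"
        using psd_decomp[OF finite_G1] assms by blast
      then show ?thesis by (intro exI[of _ "(N, v)"]) auto
    qed auto
  qed
  from choice[OF this] obtain Nv :: "nat \<Rightarrow> nat \<times> _" where Nv: "\<forall>l. l \<in> {1..L} \<longrightarrow>
     (\<forall>i\<in>G1 m d. \<forall>j\<in>G1 m d. \<rho> l (c l) i j = (\<Sum>t<fst (Nv l). snd (Nv l) t i * cnj (snd (Nv l) t j)))"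
    by blast
  define N where "N l = fst (Nv l)" for l
  define v where "v l = snd (Nv l)" for l
  define W where "W \<tau> F = (\<Prod>l\<in>{1..L}. v l (\<tau> l) (restrict (\<lambda>k. F k l) {..<m}))" for \<tau> F
  show ?thesis
  proof (rule psd_rank1_sum[where T="PiE {1..L} (\<lambda>l. {..<N l})" and v=W], intro ballI)
    fix F H assume FH: "F \<in> gidx m (seqS L d)" "H \<in> gidx m (seqS L d)"
    have "seq_state m L \<rho> c F H = (\<Prod>l\<in>{1..L}. \<Sum>t<N l. v l t (restrict (\<lambda>k. F k l) {..<m}) * cnj (v l t (restrict (\<lambda>k. H k l) {..<m})))"
      unfolding seq_state_def N_def v_def
      by (rule prod.cong[OF refl]) (use Nv restrict_mem_G1[OF FH(1)] restrict_mem_G1[OF FH(2)] in auto)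
    also have "\<dots> = (\<Sum>\<tau>\<in>PiE {1..L} (\<lambda>l. {..<N l}). \<Prod>l\<in>{1..L}. v l (\<tau> l) (restrict (\<lambda>k. F k l) {..<m}) * cnj (v l (\<tau> l) (restrict (\<lambda>k. H k l) {..<m})))"
      by (rule prod_sum_PiE) auto
    also have "\<dots> = (\<Sum>\<tau>\<in>PiE {1..L} (\<lambda>l. {..<N l}). W \<tau> F * cnj (W \<tau> H))"
      unfolding W_def by (simp add: prod.distrib cnj_prod)
    finally show "seq_state m L \<rho> c F H = (\<Sum>\<tau>\<in>PiE {1..L} (\<lambda>l. {..<N l}). W \<tau> F * cnj (W \<tau> H))" .
  qed
qed

lemma qf_basis:
  assumes b: "b \<in> G1 m d"
  shows "qf (G1 m d) A (pvec m (\<lambda>k i. if i = b k then 1 else 0)) = A b b"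
proof -
  have v: "pvec m (\<lambda>k i. if i = b k then 1 else 0) f = 0" if f: "f \<in> G1 m d" "f \<noteq> b" for f
  proof -
    obtain k where k: "f k \<noteq> b k" using f(2) by auto
    have "k < m"
    proof (rule ccontr)
      assume "\<not> k < m"
      then have "f k = undefined" "b k = undefined" using f(1) b unfolding gidx_def PiE_def extensional_def by auto
      then show False using k by simp
    qed
    then show ?thesis unfolding pvec_def using k by (auto intro: prod_zero)
  qed
  have v1: "pvec m (\<lambda>k i. if i = b k then 1 else 0) b = 1" unfolding pvec_def by simp
  show ?thesis using qf_one[OF finite_G1 b, of "pvec m (\<lambda>k i. if i = b k then 1 else 0)" A] v v1 by simp
qed

lemma exists_pos_diag:
  assumes "finite G" "psd_on G A" "trace_on G A = 1"
  shows "\<exists>b\<in>G. 0 < Re (A b b)"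
proof (rule ccontr)
  assume "\<not> (\<exists>b\<in>G. 0 < Re (A b b))"
  then have "Re (trace_on G A) \<le> 0" unfolding trace_on_def Re_sum by (intro sum_nonpos) (auto simp: not_less)
  then show False using assms(3) by simp
qed

lemma transfer:
  assumes m0: "0 < m" and ens: "\<forall>l\<in>{1..L}. ensemble m d (n l) (\<eta> l) (\<rho> l)" and x: "x \<in> seq_idx L n"
    and sd: "\<forall>c\<in>seq_idx L n. sep_dual m (seqS L d) (\<lambda>F G. complex_of_real (seq_prob L \<eta> x) * seq_state m L \<rho> x F G
                        - complex_of_real (seq_prob L \<eta> c) * seq_state m L \<rho> c F G)"
    and l: "l \<in> {1..L}" and c: "c \<in> {1..n l}"
  shows "sep_dual m (\<lambda>k. {..<d k}) (\<lambda>f g. complex_of_real (\<eta> l (x l)) * \<rho> l (x l) f g - complex_of_real (\<eta> l c) * \<rho> l c f g)"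
proof -
  have dens: "\<And>l' i. l' \<in> {1..L} \<Longrightarrow> i \<in> {1..n l'} \<Longrightarrow> psd_on (G1 m d) (\<rho> l' i) \<and> trace_on (G1 m d) (\<rho> l' i) = 1 \<and> 0 < \<eta> l' i"
    using ens unfolding ensemble_def density_on_def by blast
  have xl: "\<And>l'. l' \<in> {1..L} \<Longrightarrow> x l' \<in> {1..n l'}" using x unfolding seq_idx_def by auto
  have herm: "hermitian_on (G1 m d) (\<lambda>f g. complex_of_real (\<eta> l (x l)) * \<rho> l (x l) f g - complex_of_real (\<eta> l c) * \<rho> l c f g)"
    by (rule herm_E[OF finite_G1]) (use dens xl l c in auto)
  show ?thesis
  proof (rule sep_dual_of_pvec[OF _ herm], simp, rule allI)
    fix \<psi> :: "nat \<Rightarrow> nat \<Rightarrow> complex"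
    have "\<forall>l'\<in>{1..L}. \<exists>b\<in>G1 m d. 0 < Re (\<rho> l' (x l') b b)"
      using exists_pos_diag[OF finite_G1] dens xl by blast
    then obtain b where b: "\<forall>l'\<in>{1..L}. b l' \<in> G1 m d \<and> 0 < Re (\<rho> l' (x l') (b l') (b l'))"
      by metis
    define \<phi> where "\<phi> l' = (if l' = l then \<psi> else (\<lambda>k i. if i = b l' k then 1 else 0))" for l'
    define c' where "c' = x(l := c)"
    have c'I: "c' \<in> seq_idx L n" unfolding c'_def using x l c unfolding seq_idx_def by (auto simp: PiE_iff extensional_def)
    let ?\<Psi> = "\<lambda>k F. \<Prod>l'\<in>{1..L}. \<phi> l' k (F l')"
    let ?Q = "\<lambda>cc l'. qf (G1 m d) (\<rho> l' (cc l')) (pvec m (\<phi> l'))"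
    define a where "a l' = complex_of_real (\<eta> l' (x l')) * \<rho> l' (x l') (b l') (b l')" for l'
    have ac: "complex_of_real (\<eta> l' (c' l')) * ?Q c' l' = a l'" "complex_of_real (\<eta> l' (x l')) * ?Q x l' = a l'"
      if "l' \<in> {1..L} - {l}" for l'
      using that b qf_basis unfolding a_def \<phi>_def c'_def by auto
    have split: "complex_of_real (seq_prob L \<eta> cc) * (\<Prod>l'\<in>{1..L}. ?Q cc l')
        = (complex_of_real (\<eta> l (cc l)) * ?Q cc l) * (\<Prod>l'\<in>{1..L} - {l}. complex_of_real (\<eta> l' (cc l')) * ?Q cc l')" for cc
    proof -
      have "complex_of_real (seq_prob L \<eta> cc) * (\<Prod>l'\<in>{1..L}. ?Q cc l') = (\<Prod>l'\<in>{1..L}. complex_of_real (\<eta> l' (cc l')) * ?Q cc l')"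
        unfolding seq_prob_def by (simp add: prod.distrib of_real_prod)
      also have "\<dots> = (complex_of_real (\<eta> l (cc l)) * ?Q cc l) * (\<Prod>l'\<in>{1..L} - {l}. complex_of_real (\<eta> l' (cc l')) * ?Q cc l')"
        by (rule prod.remove) (use l in auto)
      finally show ?thesis .
    qed
    define R where "R = (\<Prod>l'\<in>{1..L} - {l}. a l')"
    have Rx: "(\<Prod>l'\<in>{1..L} - {l}. complex_of_real (\<eta> l' (x l')) * ?Q x l') = R" unfolding R_def using ac(2) by (rule prod.cong[OF refl])
    have Rc: "(\<Prod>l'\<in>{1..L} - {l}. complex_of_real (\<eta> l' (c' l')) * ?Q c' l') = R" unfolding R_def using ac(1) by (rule prod.cong[OF refl])
    define r where "r = (\<Prod>l'\<in>{1..L} - {l}. \<eta> l' (x l') * Re (\<rho> l' (x l') (b l') (b l')))"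
    have rR: "R = complex_of_real r"
    proof -
      have "a l' = complex_of_real (\<eta> l' (x l') * Re (\<rho> l' (x l') (b l') (b l')))" if "l' \<in> {1..L} - {l}" for l'
      proof -
        have "Im (\<rho> l' (x l') (b l') (b l')) = 0" using psd_diag(1)[where I="G1 m d" and A="\<rho> l' (x l')", OF finite_G1] dens xl b that by auto
        then show ?thesis unfolding a_def by (simp add: complex_eq_iff)
      qed
      then show ?thesis unfolding R_def r_def of_real_prod by (rule prod.cong[OF refl])
    qed
    have rp: "0 < r" unfolding r_def using dens xl b by (auto intro!: prod_pos)
    let ?E1 = "\<lambda>f g. complex_of_real (\<eta> l (x l)) * \<rho> l (x l) f g - complex_of_real (\<eta> l c) * \<rho> l c f g"
    have "qf (gidx m (seqS L d)) (\<lambda>F G. complex_of_real (seq_prob L \<eta> x) * seq_state m L \<rho> x F G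
                        - complex_of_real (seq_prob L \<eta> c') * seq_state m L \<rho> c' F G) (pvec m ?\<Psi>)
        = complex_of_real (seq_prob L \<eta> x) * (\<Prod>l'\<in>{1..L}. ?Q x l') - complex_of_real (seq_prob L \<eta> c') * (\<Prod>l'\<in>{1..L}. ?Q c' l')"
      by (simp only: qf_diff qf_scale qf_seq)
    also have "\<dots> = R * (complex_of_real (\<eta> l (x l)) * ?Q x l - complex_of_real (\<eta> l (c' l)) * ?Q c' l)"
      unfolding split Rx Rc by (simp add: algebra_simps)
    also have "complex_of_real (\<eta> l (x l)) * ?Q x l - complex_of_real (\<eta> l (c' l)) * ?Q c' l = qf (G1 m d) ?E1 (pvec m \<psi>)"
      unfolding c'_def \<phi>_def by (simp add: qf_diff qf_scale)
    finally have eq: "qf (gidx m (seqS L d)) (\<lambda>F G. complex_of_real (seq_prob L \<eta> x) * seq_state m L \<rho> x F G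
                        - complex_of_real (seq_prob L \<eta> c') * seq_state m L \<rho> c' F G) (pvec m ?\<Psi>)
        = complex_of_real r * qf (G1 m d) ?E1 (pvec m \<psi>)" unfolding rR .
    have "0 \<le> Re (qf (gidx m (seqS L d)) (\<lambda>F G. complex_of_real (seq_prob L \<eta> x) * seq_state m L \<rho> x F G
                        - complex_of_real (seq_prob L \<eta> c') * seq_state m L \<rho> c' F G) (pvec m ?\<Psi>))"
      by (rule pvec_of_sep_dual[OF _ m0]) (use sd c'I in \<open>auto simp: seqS_def intro!: finite_PiE\<close>)
    then have "0 \<le> r * Re (qf (G1 m d) ?E1 (pvec m \<psi>))" unfolding eq by simp
    then show "0 \<le> Re (qf (G1 m d) ?E1 (pvec m \<psi>))" using rp by (simp add: zero_le_mult_iff)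
  qed
qed



theorem theorem2:
  fixes m L :: nat and d n :: "nat \<Rightarrow> nat"
    and \<eta> :: "nat \<Rightarrow> nat \<Rightarrow> real" and \<rho> :: "nat \<Rightarrow> nat \<Rightarrow> (nat \<Rightarrow> nat) op"
    and x :: "nat \<Rightarrow> nat"
  assumes "m \<ge> 2" and "\<forall>k<m. d k \<ge> 2" and "L \<ge> 1"
    and "\<forall>l\<in>{1..L}. ensemble m d (n l) (\<eta> l) (\<rho> l)"
    and "x \<in> seq_idx L n"
  shows "(p_L m (seqS L d) (seq_idx L n) (seq_prob L \<eta>) (seq_state m L \<rho>) = seq_prob L \<eta> x
          \<longleftrightarrow> (\<forall>c\<in>seq_idx L n. sep_dual m (seqS L d)
                 (\<lambda>F G. complex_of_real (seq_prob L \<eta> x) * seq_state m L \<rho> x F G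
                        - complex_of_real (seq_prob L \<eta> c) * seq_state m L \<rho> c F G)))
      \<and> (p_L m (seqS L d) (seq_idx L n) (seq_prob L \<eta>) (seq_state m L \<rho>) = seq_prob L \<eta> x \<longrightarrow>
           p_L m (seqS L d) (seq_idx L n) (seq_prob L \<eta>) (seq_state m L \<rho>)
             = p_SEP m (seqS L d) (seq_idx L n) (seq_prob L \<eta>) (seq_state m L \<rho>)
         \<and> p_L m (seqS L d) (seq_idx L n) (seq_prob L \<eta>) (seq_state m L \<rho>)
             = (\<Prod>l\<in>{1..L}. p_L m (\<lambda>k. {..<d k}) {1..n l} (\<eta> l) (\<rho> l)))"
proof -
  have m0: "0 < m" using assms(1) by simp
  have ens: "\<forall>l\<in>{1..L}. ensemble m d (n l) (\<eta> l) (\<rho> l)" by (rule assms(4))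
  have dens: "\<And>l' i. l' \<in> {1..L} \<Longrightarrow> i \<in> {1..n l'} \<Longrightarrow> psd_on (G1 m d) (\<rho> l' i) \<and> trace_on (G1 m d) (\<rho> l' i) = 1 \<and> 0 < \<eta> l' i"
    using ens unfolding ensemble_def density_on_def by blast
  have cl: "\<And>c l. c \<in> seq_idx L n \<Longrightarrow> l \<in> {1..L} \<Longrightarrow> c l \<in> {1..n l}" unfolding seq_idx_def by auto
  have finS: "\<And>k. k < m \<Longrightarrow> finite (seqS L d k)" unfolding seqS_def by (auto intro!: finite_PiE)
  have finC: "finite (seq_idx L n)" unfolding seq_idx_def by (auto intro!: finite_PiE)
  have etaC: "\<forall>c\<in>seq_idx L n. 0 \<le> seq_prob L \<eta> c"
  proof
    fix c assume c: "c \<in> seq_idx L n"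
    show "0 \<le> seq_prob L \<eta> c" unfolding seq_prob_def
    proof (rule prod_nonneg)
      fix l assume l: "l \<in> {1..L}"
      show "0 \<le> \<eta> l (c l)" using dens[OF l cl[OF c l]] by simp
    qed
  qed
  have rhoC: "\<forall>c\<in>seq_idx L n. psd_on (gidx m (seqS L d)) (seq_state m L \<rho> c) \<and> trace_on (gidx m (seqS L d)) (seq_state m L \<rho> c) = 1"
    using psd_seq trace_seq dens cl by blast
  note Gen = general_thm[OF finS m0 finC assms(5) etaC rhoC]
  have single: "p_L m (\<lambda>k. {..<d k}) {1..n l} (\<eta> l) (\<rho> l) = \<eta> l (x l)"
    if SD: "\<forall>c\<in>seq_idx L n. sep_dual m (seqS L d) (\<lambda>F G. complex_of_real (seq_prob L \<eta> x) * seq_state m L \<rho> x F G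
                        - complex_of_real (seq_prob L \<eta> c) * seq_state m L \<rho> c F G)"
      and l: "l \<in> {1..L}" for l
  proof -
    have "\<forall>c\<in>{1..n l}. sep_dual m (\<lambda>k. {..<d k}) (\<lambda>f g. complex_of_real (\<eta> l (x l)) * \<rho> l (x l) f g - complex_of_real (\<eta> l c) * \<rho> l c f g)"
      using transfer[OF m0 ens assms(5) SD l] by blast
    moreover note general_thm[where S="\<lambda>k. {..<d k}" and m=m and C="{1..n l}" and \<eta>="\<eta> l" and \<rho>="\<rho> l" and x="x l"]
    moreover have "\<forall>c\<in>{1..n l}. 0 \<le> \<eta> l c" using dens[OF l] by (meson less_imp_le)
    ultimately show ?thesis using m0 cl[OF assms(5) l] dens[OF l] by auto
  qed
  show ?thesis
  proof (intro conjI impI)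
    show "(p_L m (seqS L d) (seq_idx L n) (seq_prob L \<eta>) (seq_state m L \<rho>) = seq_prob L \<eta> x
          \<longleftrightarrow> (\<forall>c\<in>seq_idx L n. sep_dual m (seqS L d)
                 (\<lambda>F G. complex_of_real (seq_prob L \<eta> x) * seq_state m L \<rho> x F G
                        - complex_of_real (seq_prob L \<eta> c) * seq_state m L \<rho> c F G)))"
      using Gen by blast
  next
    assume pl: "p_L m (seqS L d) (seq_idx L n) (seq_prob L \<eta>) (seq_state m L \<rho>) = seq_prob L \<eta> x"
    then have SD: "\<forall>c\<in>seq_idx L n. sep_dual m (seqS L d)
                 (\<lambda>F G. complex_of_real (seq_prob L \<eta> x) * seq_state m L \<rho> x F G
                        - complex_of_real (seq_prob L \<eta> c) * seq_state m L \<rho> c F G)" using Gen by blast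
    show "p_L m (seqS L d) (seq_idx L n) (seq_prob L \<eta>) (seq_state m L \<rho>)
             = p_SEP m (seqS L d) (seq_idx L n) (seq_prob L \<eta>) (seq_state m L \<rho>)"
      using Gen SD by simp
    have "(\<Prod>l\<in>{1..L}. p_L m (\<lambda>k. {..<d k}) {1..n l} (\<eta> l) (\<rho> l)) = (\<Prod>l\<in>{1..L}. \<eta> l (x l))"
      by (rule prod.cong[OF refl]) (rule single[OF SD])
    also have "\<dots> = seq_prob L \<eta> x" unfolding seq_prob_def ..
    finally show "p_L m (seqS L d) (seq_idx L n) (seq_prob L \<eta>) (seq_state m L \<rho>)
             = (\<Prod>l\<in>{1..L}. p_L m (\<lambda>k. {..<d k}) {1..n l} (\<eta> l) (\<rho> l))" using pl by simp
  qed
qed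

end
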